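(* Let $X_1,X_2,\dots$ be i.i.d. $N(\mu,\sigma^2)$ with $\mu\in\mathbb{R}$, $\sigma>0$. For $n\ge2$ let $S_n^2=(n-1)^{-1}\sum_{i=1}^n(X_i-\bar X_n)^2$ with $\bar X_n=n^{-1}\sum_{i=1}^nX_i$. Let $A>0$, $c>0$, $n^*=\sigma\sqrt{A/c}$, fix an integer $k\ge1$ and $0<\rho\le1$, let $m=m_0k+1$ for an integer $m_0\ge1$, and define $$T=\inf\{n\ge 0:\ m+kn\ge \rho S_{m+kn}\sqrt{A/c}\},\qquad N=\lfloor \rho^{-1}(m+kT)\rfloor+1,$$ where $\lfloor u\rfloor$ denotes the largest integer strictly smaller than $u$. Consider the limit operations $m_0\to\infty$, $m\to\infty$, $c=O(m^{-2r})$, $n^*=O(m^r)$ and $\limsup m/n^*<\rho$, with $r>1$ fixed. Then under these limit operations, the family of random variables $(N-n^* )^2/n^*$ is uniformly integrable. *)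

theory Defs
  imports "HOL-Probability.Probability" "HOL-Library.Landau_Symbols"
begin

text \<open>Observations X_1, X_2, ... are represented by X 0, X 1, ... .\<close>

definition sample_mean :: "(nat \<Rightarrow> 'a \<Rightarrow> real) \<Rightarrow> nat \<Rightarrow> 'a \<Rightarrow> real" where
  "sample_mean X n \<omega> = (\<Sum>i<n. X i \<omega>) / real n"

definition sample_var :: "(nat \<Rightarrow> 'a \<Rightarrow> real) \<Rightarrow> nat \<Rightarrow> 'a \<Rightarrow> real" where
  "sample_var X n \<omega> = (\<Sum>i<n. (X i \<omega> - sample_mean X n \<omega>)\<^sup>2) / (real n - 1)"

definition sample_sd :: "(nat \<Rightarrow> 'a \<Rightarrow> real) \<Rightarrow> nat \<Rightarrow> 'a \<Rightarrow> real" where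
  "sample_sd X n \<omega> = sqrt (sample_var X n \<omega>)"

definition strict_floor :: "real \<Rightarrow> int" where
  "strict_floor u = (GREATEST z::int. real_of_int z < u)"

definition stopT :: "(nat \<Rightarrow> 'a \<Rightarrow> real) \<Rightarrow> nat \<Rightarrow> nat \<Rightarrow> real \<Rightarrow> real \<Rightarrow> real \<Rightarrow> 'a \<Rightarrow> nat" where
  "stopT X m k \<rho> A c \<omega> =
     (LEAST n. real (m + k * n) \<ge> \<rho> * sample_sd X (m + k * n) \<omega> * sqrt (A / c))"

definition sampleN :: "(nat \<Rightarrow> 'a \<Rightarrow> real) \<Rightarrow> nat \<Rightarrow> nat \<Rightarrow> real \<Rightarrow> real \<Rightarrow> real \<Rightarrow> 'a \<Rightarrow> int" where
  "sampleN X m k \<rho> A c \<omega> =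
     strict_floor (real (m + k * stopT X m k \<rho> A c \<omega>) / \<rho>) + 1"

end

theory Submission
  imports Defs "HOL-Real_Asymp.Real_Asymp"
begin



definition Uf :: "(nat \<Rightarrow> 'a \<Rightarrow> real) \<Rightarrow> real \<Rightarrow> nat \<Rightarrow> 'a \<Rightarrow> real" where
  "Uf X \<mu> n \<omega> = (\<Sum>i<n. (X i \<omega> - \<mu>)\<^sup>2)"
definition Df :: "(nat \<Rightarrow> 'a \<Rightarrow> real) \<Rightarrow> real \<Rightarrow> nat \<Rightarrow> 'a \<Rightarrow> real" where
  "Df X \<mu> n \<omega> = (\<Sum>i<n. X i \<omega> - \<mu>)"
definition Qf :: "(nat \<Rightarrow> 'a \<Rightarrow> real) \<Rightarrow> nat \<Rightarrow> 'a \<Rightarrow> real" where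
  "Qf X n \<omega> = (\<Sum>i<n. (X i \<omega> - sample_mean X n \<omega>)\<^sup>2)"

lemma inv_sqrt_pow: "w > 0 \<Longrightarrow> (1 / sqrt w) ^ n = exp (- (real n) * ln w / 2)"
proof -
  assume w: "w > 0"
  have "1 / sqrt w = exp (- ln w / 2)"
    using w by (simp add: powr_half_sqrt[symmetric] powr_def exp_minus field_simps)
  hence "(1 / sqrt w) ^ n = exp (- ln w / 2) ^ n" by simp
  also have "\<dots> = exp (real n * (- ln w / 2))" by (rule exp_of_nat_mult[symmetric])
  finally show ?thesis by simp
qed

lemma nn_integral_normal_density_1:
  assumes "\<sigma> > 0" shows "(\<integral>\<^sup>+x. ennreal (normal_density \<mu> \<sigma> x) \<partial>lborel) = 1"
proof -
  interpret prob_space "density lborel (normal_density \<mu> \<sigma>)" using prob_space_normal_density assms by blast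
  have "emeasure (density lborel (normal_density \<mu> \<sigma>)) UNIV = 1" using emeasure_space_1 by simp
  thus ?thesis by (simp add: emeasure_density)
qed

lemma normal_sq_identity:
  assumes s: "\<sigma> > 0" and a: "a < 1/2"
  shows "normal_density \<mu> \<sigma> x * exp (a * (x - \<mu>)\<^sup>2 / \<sigma>\<^sup>2)
       = (1 / sqrt (1 - 2*a)) * normal_density \<mu> (\<sigma> / sqrt (1 - 2*a)) x"
proof -
  have p: "1 - 2*a > 0" using a by simp
  have q: "(\<sigma> / sqrt (1 - 2*a))\<^sup>2 = \<sigma>\<^sup>2 / (1 - 2*a)" using p by (simp add: power_divide)
  have ex: "-(x - \<mu>)\<^sup>2 / (2 * \<sigma>\<^sup>2) + a * (x - \<mu>)\<^sup>2 / \<sigma>\<^sup>2 = -(x - \<mu>)\<^sup>2 / (2 * (\<sigma> / sqrt (1 - 2*a))\<^sup>2)"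
    unfolding q using p s by (simp add: field_simps)
  have e: "exp (-(x - \<mu>)\<^sup>2 / (2 * \<sigma>\<^sup>2)) * exp (a * (x - \<mu>)\<^sup>2 / \<sigma>\<^sup>2)
      = exp (-(x - \<mu>)\<^sup>2 / (2 * (\<sigma> / sqrt (1 - 2*a))\<^sup>2))"
    by (simp only: exp_add[symmetric] ex)
  have c: "1 / sqrt (2 * pi * \<sigma>\<^sup>2) = (1 / sqrt (1 - 2*a)) * (1 / sqrt (2 * pi * (\<sigma> / sqrt (1 - 2*a))\<^sup>2))"
    unfolding q using p s by (simp add: real_sqrt_divide real_sqrt_mult field_simps)
  show ?thesis unfolding normal_density_def c
    by (simp only: mult.assoc e)
qed

lemma normal_lin_identity:
  assumes s: "\<sigma> > 0"
  shows "normal_density \<mu> \<sigma> x * exp (\<theta> * (x - \<mu>))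
       = exp (\<theta>\<^sup>2 * \<sigma>\<^sup>2 / 2) * normal_density (\<mu> + \<theta> * \<sigma>\<^sup>2) \<sigma> x"
proof -
  have ex: "-(x - \<mu>)\<^sup>2 / (2 * \<sigma>\<^sup>2) + \<theta> * (x - \<mu>) = \<theta>\<^sup>2 * \<sigma>\<^sup>2 / 2 + -(x - (\<mu> + \<theta> * \<sigma>\<^sup>2))\<^sup>2 / (2 * \<sigma>\<^sup>2)"
    using s by (simp add: power2_eq_square field_simps)
  have e: "exp (-(x - \<mu>)\<^sup>2 / (2 * \<sigma>\<^sup>2)) * exp (\<theta> * (x - \<mu>))
      = exp (\<theta>\<^sup>2 * \<sigma>\<^sup>2 / 2) * exp (-(x - (\<mu> + \<theta> * \<sigma>\<^sup>2))\<^sup>2 / (2 * \<sigma>\<^sup>2))"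
    by (simp only: exp_add[symmetric] ex)
  show ?thesis unfolding normal_density_def
    by (simp only: mult.assoc e) (simp only: mult_ac)
qed



lemma sq_dev:
  fixes x :: "nat \<Rightarrow> real"
  assumes n: "n > 0"
  shows "(\<Sum>i<n. (x i - c)\<^sup>2) = (\<Sum>i<n. (x i - (\<Sum>j<n. x j) / real n)\<^sup>2) + real n * ((\<Sum>j<n. x j) / real n - c)\<^sup>2"
proof -
  define xb where "xb = (\<Sum>j<n. x j) / real n"
  have z: "(\<Sum>i<n. (x i - xb)) = 0" using n by (simp add: sum_subtractf xb_def)
  have "(\<Sum>i<n. (x i - c)\<^sup>2) = (\<Sum>i<n. (x i - xb)\<^sup>2 + 2 * (xb - c) * (x i - xb) + (xb - c)\<^sup>2)"
    by (intro sum.cong) (auto simp: power2_eq_square algebra_simps)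
  also have "\<dots> = (\<Sum>i<n. (x i - xb)\<^sup>2) + 2 * (xb - c) * (\<Sum>i<n. (x i - xb)) + real n * (xb - c)\<^sup>2"
    by (simp add: sum.distrib sum_distrib_left)
  finally show ?thesis using z by (simp add: xb_def)
qed

lemma Uf_Qf:
  assumes n: "n > 0"
  shows "Uf X \<mu> n \<omega> = Qf X n \<omega> + (Df X \<mu> n \<omega>)\<^sup>2 / real n"
proof -
  have d: "Df X \<mu> n \<omega> = real n * ((\<Sum>j<n. X j \<omega>) / real n - \<mu>)"
    using n by (simp add: Df_def sum_subtractf algebra_simps)
  show ?thesis
    unfolding Uf_def Qf_def sample_mean_def d using sq_dev[OF n, of "\<lambda>i. X i \<omega>" \<mu>] n
    by (simp add: power2_eq_square)
qed

lemma Qf_le_Uf: "Qf X n \<omega> \<le> Uf X \<mu> n \<omega>"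
proof (cases "n = 0")
  case True thus ?thesis by (simp add: Qf_def Uf_def)
next
  case False thus ?thesis using Uf_Qf[of n X \<mu> \<omega>] by simp
qed

lemma Qf_Suc: "Qf X n \<omega> \<le> Qf X (Suc n) \<omega>"
proof (cases "n = 0")
  case True thus ?thesis by (simp add: Qf_def sample_mean_def)
next
  case False
  define c where "c = sample_mean X (Suc n) \<omega>"
  have "Qf X n \<omega> \<le> (\<Sum>i<n. (X i \<omega> - c)\<^sup>2)"
    using sq_dev[of n "\<lambda>i. X i \<omega>" c] False by (simp add: Qf_def sample_mean_def)
  also have "\<dots> \<le> (\<Sum>i<Suc n. (X i \<omega> - c)\<^sup>2)" by simp
  also have "\<dots> = Qf X (Suc n) \<omega>" by (simp add: Qf_def c_def)
  finally show ?thesis .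
qed

lemma Qf_mono: "n \<le> n' \<Longrightarrow> Qf X n \<omega> \<le> Qf X n' \<omega>"
  by (induction n' rule: dec_induct) (auto intro: order.trans[OF _ Qf_Suc])

lemma strict_floor_eq: "strict_floor u = \<lceil>u\<rceil> - 1"
  unfolding strict_floor_def
  by (rule Greatest_equality) (linarith, simp add: less_ceiling_iff[symmetric])

locale gseq = prob_space M for M :: "'a measure" +
  fixes X :: "nat \<Rightarrow> 'a \<Rightarrow> real" and \<mu> \<sigma> :: real
  assumes indep: "indep_vars (\<lambda>_. borel) X UNIV"
    and normal: "\<And>i. distributed M lborel (X i) (normal_density \<mu> \<sigma>)"
    and \<sigma>_pos: "\<sigma> > 0"
begin

lemma X_meas[measurable]: "X i \<in> borel_measurable M"
  using distributed_measurable[OF normal[of i]] by simp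

lemma mgf_gen:
  assumes g: "g \<in> borel_measurable borel"
  shows "(\<integral>\<^sup>+\<omega>. ennreal (g (X i \<omega>)) \<partial>M) = (\<integral>\<^sup>+x. ennreal (normal_density \<mu> \<sigma> x * g x) \<partial>lborel)"
proof -
  have "(\<integral>\<^sup>+x. ennreal (normal_density \<mu> \<sigma> x) * ennreal (g x) \<partial>lborel) = (\<integral>\<^sup>+\<omega>. ennreal (g (X i \<omega>)) \<partial>M)"
    by (rule distributed_nn_integral[OF normal]) (use g in simp)
  moreover have "(\<integral>\<^sup>+x. ennreal (normal_density \<mu> \<sigma> x) * ennreal (g x) \<partial>lborel) = (\<integral>\<^sup>+x. ennreal (normal_density \<mu> \<sigma> x * g x) \<partial>lborel)"
    by (intro nn_integral_cong) (simp add: ennreal_mult')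
  ultimately show ?thesis by simp
qed

lemma mgf_sq:
  assumes a: "a < 1/2"
  shows "(\<integral>\<^sup>+\<omega>. ennreal (exp (a * (X i \<omega> - \<mu>)\<^sup>2 / \<sigma>\<^sup>2)) \<partial>M) = ennreal (1 / sqrt (1 - 2*a))"
proof -
  have p: "1 - 2*a > 0" using a by simp
  have "(\<integral>\<^sup>+\<omega>. ennreal (exp (a * (X i \<omega> - \<mu>)\<^sup>2 / \<sigma>\<^sup>2)) \<partial>M)
      = (\<integral>\<^sup>+x. ennreal (normal_density \<mu> \<sigma> x * exp (a * (x - \<mu>)\<^sup>2 / \<sigma>\<^sup>2)) \<partial>lborel)"
    by (rule mgf_gen[where g = "\<lambda>x. exp (a * (x - \<mu>)\<^sup>2 / \<sigma>\<^sup>2)"]) simp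
  also have "\<dots> = (\<integral>\<^sup>+x. ennreal (1 / sqrt (1 - 2*a)) * ennreal (normal_density \<mu> (\<sigma> / sqrt (1 - 2*a)) x) \<partial>lborel)"
    using p by (intro nn_integral_cong) (simp only: normal_sq_identity[OF \<sigma>_pos a], rule ennreal_mult', simp)
  also have "\<dots> = ennreal (1 / sqrt (1 - 2*a)) * (\<integral>\<^sup>+x. ennreal (normal_density \<mu> (\<sigma> / sqrt (1 - 2*a)) x) \<partial>lborel)"
    by (rule nn_integral_cmult) simp
  also have "\<dots> = ennreal (1 / sqrt (1 - 2*a))"
    using p \<sigma>_pos by (simp add: nn_integral_normal_density_1)
  finally show ?thesis .
qed

lemma mgf_lin:
  "(\<integral>\<^sup>+\<omega>. ennreal (exp (\<theta> * (X i \<omega> - \<mu>))) \<partial>M) = ennreal (exp (\<theta>\<^sup>2 * \<sigma>\<^sup>2 / 2))"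
proof -
  have "(\<integral>\<^sup>+\<omega>. ennreal (exp (\<theta> * (X i \<omega> - \<mu>))) \<partial>M)
      = (\<integral>\<^sup>+x. ennreal (normal_density \<mu> \<sigma> x * exp (\<theta> * (x - \<mu>))) \<partial>lborel)"
    by (rule mgf_gen[where g = "\<lambda>x. exp (\<theta> * (x - \<mu>))"]) simp
  also have "\<dots> = (\<integral>\<^sup>+x. ennreal (exp (\<theta>\<^sup>2 * \<sigma>\<^sup>2 / 2)) * ennreal (normal_density (\<mu> + \<theta> * \<sigma>\<^sup>2) \<sigma> x) \<partial>lborel)"
    by (intro nn_integral_cong) (simp add: normal_lin_identity[OF \<sigma>_pos] ennreal_mult')
  also have "\<dots> = ennreal (exp (\<theta>\<^sup>2 * \<sigma>\<^sup>2 / 2)) * (\<integral>\<^sup>+x. ennreal (normal_density (\<mu> + \<theta> * \<sigma>\<^sup>2) \<sigma> x) \<partial>lborel)"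
    by (rule nn_integral_cmult) simp
  also have "\<dots> = ennreal (exp (\<theta>\<^sup>2 * \<sigma>\<^sup>2 / 2))"
    using \<sigma>_pos by (simp add: nn_integral_normal_density_1)
  finally show ?thesis .
qed

lemma mgf_prod:
  assumes I: "finite I" and g: "g \<in> borel_measurable borel"
  shows "(\<integral>\<^sup>+\<omega>. ennreal (exp (\<Sum>i\<in>I. g (X i \<omega>))) \<partial>M) = (\<Prod>i\<in>I. \<integral>\<^sup>+\<omega>. ennreal (exp (g (X i \<omega>))) \<partial>M)"
proof -
  have ind: "indep_vars (\<lambda>_. borel) (\<lambda>i \<omega>. ennreal (exp (g (X i \<omega>)))) I"
    by (rule indep_vars_compose2[OF indep_vars_subset[OF indep]]) (use g in auto)
  have "(\<integral>\<^sup>+\<omega>. ennreal (exp (\<Sum>i\<in>I. g (X i \<omega>))) \<partial>M) = (\<integral>\<^sup>+\<omega>. (\<Prod>i\<in>I. ennreal (exp (g (X i \<omega>)))) \<partial>M)"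
    using I by (intro nn_integral_cong) (simp add: exp_sum prod_ennreal)
  also have "\<dots> = (\<Prod>i\<in>I. \<integral>\<^sup>+\<omega>. ennreal (exp (g (X i \<omega>))) \<partial>M)"
    by (rule indep_vars_nn_integral[OF I ind]) simp
  finally show ?thesis .
qed


lemma markov_exp:
  assumes f: "f \<in> borel_measurable M"
  shows "emeasure M {\<omega>\<in>space M. t \<le> f \<omega>} \<le> (\<integral>\<^sup>+\<omega>. ennreal (exp (f \<omega> - t)) \<partial>M)"
proof -
  have "emeasure M {\<omega>\<in>space M. t \<le> f \<omega>} = (\<integral>\<^sup>+\<omega>. indicator {\<omega>\<in>space M. t \<le> f \<omega>} \<omega> \<partial>M)"
    using f by (intro nn_integral_indicator[symmetric]) measurable
  also have "\<dots> \<le> (\<integral>\<^sup>+\<omega>. ennreal (exp (f \<omega> - t)) \<partial>M)"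
    by (intro nn_integral_mono) (auto simp: indicator_def)
  finally show ?thesis .
qed

lemma mgf_bound:
  assumes I: "finite I" and g: "g \<in> borel_measurable borel"
    and c: "\<And>i. (\<integral>\<^sup>+\<omega>. ennreal (exp (g (X i \<omega>))) \<partial>M) = ennreal c" and c0: "c \<ge> 0"
  shows "emeasure M {\<omega>\<in>space M. t \<le> (\<Sum>i\<in>I. g (X i \<omega>))} \<le> ennreal (exp (-t) * c ^ card I)"
proof -
  have "emeasure M {\<omega>\<in>space M. t \<le> (\<Sum>i\<in>I. g (X i \<omega>))} \<le> (\<integral>\<^sup>+\<omega>. ennreal (exp ((\<Sum>i\<in>I. g (X i \<omega>)) - t)) \<partial>M)"
    by (rule markov_exp) (use g in measurable)
  also have "\<dots> = (\<integral>\<^sup>+\<omega>. ennreal (exp (-t)) * ennreal (exp (\<Sum>i\<in>I. g (X i \<omega>))) \<partial>M)"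
    by (intro nn_integral_cong) (simp add: exp_diff exp_minus ennreal_mult'[symmetric] field_simps)
  also have "\<dots> = ennreal (exp (-t)) * (\<integral>\<^sup>+\<omega>. ennreal (exp (\<Sum>i\<in>I. g (X i \<omega>))) \<partial>M)"
    by (rule nn_integral_cmult) (use g in measurable)
  also have "\<dots> = ennreal (exp (-t)) * (\<Prod>i\<in>I. ennreal c)"
    by (simp add: mgf_prod[OF I g] c)
  also have "\<dots> = ennreal (exp (-t) * c ^ card I)"
    using c0 by (simp add: prod_ennreal ennreal_mult' ennreal_power)
  finally show ?thesis .
qed

lemma U_upper_raw:
  assumes l: "0 < l" "l < 1/2"
  shows "emeasure M {\<omega>\<in>space M. t \<le> Uf X \<mu> n \<omega>} \<le> ennreal (exp (- (l * t / \<sigma>\<^sup>2)) * (1 / sqrt (1 - 2*l)) ^ n)"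
proof -
  have "{\<omega>\<in>space M. t \<le> Uf X \<mu> n \<omega>} = {\<omega>\<in>space M. l * t / \<sigma>\<^sup>2 \<le> (\<Sum>i\<in>{..<n}. l * (X i \<omega> - \<mu>)\<^sup>2 / \<sigma>\<^sup>2)}"
    using l \<sigma>_pos by (auto simp: Uf_def sum_divide_distrib[symmetric] sum_distrib_left[symmetric] divide_le_cancel mult_le_cancel_left_pos)
  also have "emeasure M \<dots> \<le> ennreal (exp (- (l * t / \<sigma>\<^sup>2)) * (1 / sqrt (1 - 2*l)) ^ card {..<n})"
    by (rule mgf_bound) (use l in \<open>auto simp: mgf_sq\<close>)
  finally show ?thesis by simp
qed

lemma U_lower_raw:
  assumes l: "0 < l"
  shows "emeasure M {\<omega>\<in>space M. Uf X \<mu> n \<omega> \<le> t} \<le> ennreal (exp (l * t / \<sigma>\<^sup>2) * (1 / sqrt (1 + 2*l)) ^ n)"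
proof -
  have e: "(\<Sum>i\<in>{..<n}. (-l) * (X i \<omega> - \<mu>)\<^sup>2 / \<sigma>\<^sup>2) = - (l / \<sigma>\<^sup>2 * Uf X \<mu> n \<omega>)" for \<omega>
    by (simp add: Uf_def sum_distrib_left sum_negf[symmetric] sum_divide_distrib)
  have p: "l / \<sigma>\<^sup>2 > 0" using l \<sigma>_pos by simp
  have "{\<omega>\<in>space M. Uf X \<mu> n \<omega> \<le> t} = {\<omega>\<in>space M. - (l * t / \<sigma>\<^sup>2) \<le> (\<Sum>i\<in>{..<n}. (-l) * (X i \<omega> - \<mu>)\<^sup>2 / \<sigma>\<^sup>2)}"
    unfolding e using mult_le_cancel_left_pos[OF p] by (auto simp: times_divide_eq_right[symmetric] simp del: times_divide_eq_right)
  also have "emeasure M \<dots> \<le> ennreal (exp (- (- (l * t / \<sigma>\<^sup>2))) * (1 / sqrt (1 - 2*(-l))) ^ card {..<n})"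
  proof (rule mgf_bound)
    fix i show "(\<integral>\<^sup>+\<omega>. ennreal (exp ((-l) * (X i \<omega> - \<mu>)\<^sup>2 / \<sigma>\<^sup>2)) \<partial>M) = ennreal (1 / sqrt (1 - 2*(-l)))"
      by (rule mgf_sq) (use l in simp)
  qed (use l in auto)
  finally show ?thesis by simp
qed

lemma D_upper_raw:
  shows "emeasure M {\<omega>\<in>space M. b \<le> \<theta> * Df X \<mu> n \<omega>} \<le> ennreal (exp (- b) * exp (\<theta>\<^sup>2 * \<sigma>\<^sup>2 / 2) ^ n)"
proof -
  have "{\<omega>\<in>space M. b \<le> \<theta> * Df X \<mu> n \<omega>} = {\<omega>\<in>space M. b \<le> (\<Sum>i\<in>{..<n}. \<theta> * (X i \<omega> - \<mu>))}"
    by (auto simp: Df_def sum_distrib_left)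
  also have "emeasure M \<dots> \<le> ennreal (exp (- b) * exp (\<theta>\<^sup>2 * \<sigma>\<^sup>2 / 2) ^ card {..<n})"
    by (rule mgf_bound) (auto simp: mgf_lin)
  finally show ?thesis by simp
qed


lemma U_upper:
  assumes y: "y > 0"
  shows "emeasure M {\<omega>\<in>space M. (1 + y) * real n * \<sigma>\<^sup>2 \<le> Uf X \<mu> n \<omega>} \<le> ennreal (exp (- (real n * min y (y\<^sup>2) / 16)))"
proof -
  define l where "l = min y 1 / 8"
  have l: "0 < l" "l \<le> 1/8" using y by (auto simp: l_def)
  have w: "1 - 2*l > 0" using l by simp
  have lnb: "- (2*l) - 2 * (2*l)\<^sup>2 \<le> ln (1 - 2*l)" by (rule ln_one_minus_pos_lower_bound) (use l in auto)
  have key: "min y (y\<^sup>2) / 16 \<le> l * (1 + y) + ln (1 - 2*l) / 2"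
  proof (cases "y \<le> 1")
    case True
    hence e: "y = 8 * l" "min y (y\<^sup>2) = y\<^sup>2" using y by (auto simp: l_def power2_eq_square mult_le_cancel_left1)
    have "ln (1 - 2*l) \<ge> -2*l - 8*(l*l)" using lnb by (simp add: power2_eq_square)
    moreover have "y\<^sup>2 = 64 * (l*l)" "l * y = 8 * (l*l)" using e by (simp_all add: power2_eq_square)
    moreover have "l * (1 + y) = l + 8 * (l*l)" using e by (simp add: algebra_simps)
    ultimately show ?thesis using e by linarith
  next
    case False
    hence e: "l = 1 / 8" "min y (y\<^sup>2) = y" using y by (auto simp: l_def power2_eq_square)
    have l34: "ln (3/4) \<ge> -(3/8::real)" using lnb e by (simp add: power2_eq_square)
    have c1: "l * (1 + y) + ln (1 - 2*l) / 2 = (1 + y) / 8 + ln (3/4) / 2" unfolding e(1) by simp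
    have g0: "y / 16 \<le> (1 + y) / 8 + L / 2" if "L \<ge> -(3/8)" for L::real using False that by argo
    have g: "y / 16 \<le> (1 + y) / 8 + ln (3/4) / 2" by (rule g0[OF l34])
    show ?thesis unfolding e(2) c1 using g .
  qed
  have "emeasure M {\<omega>\<in>space M. (1 + y) * real n * \<sigma>\<^sup>2 \<le> Uf X \<mu> n \<omega>}
     \<le> ennreal (exp (- (l * ((1 + y) * real n * \<sigma>\<^sup>2) / \<sigma>\<^sup>2)) * (1 / sqrt (1 - 2*l)) ^ n)"
    by (rule U_upper_raw) (use l in auto)
  also have "exp (- (l * ((1 + y) * real n * \<sigma>\<^sup>2) / \<sigma>\<^sup>2)) * (1 / sqrt (1 - 2*l)) ^ n
      = exp (- (real n * (l * (1 + y) + ln (1 - 2*l) / 2)))"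
    unfolding inv_sqrt_pow[OF w] exp_add[symmetric]
    by (rule arg_cong[where f=exp]) (use \<sigma>_pos in \<open>simp add: field_simps\<close>)
  also have "\<dots> \<le> exp (- (real n * min y (y\<^sup>2) / 16))"
    using mult_left_mono[OF key, of "real n"] by (simp add: algebra_simps)
  finally show ?thesis by (simp add: ennreal_leI)
qed

lemma U_lower:
  assumes a: "0 \<le> a" "a < 1"
  shows "emeasure M {\<omega>\<in>space M. Uf X \<mu> n \<omega> \<le> a * real n * \<sigma>\<^sup>2} \<le> ennreal (exp (- (real n * (1 - a)\<^sup>2 / 8)))"
proof -
  define l where "l = (1 - a) / 4"
  have l: "0 < l" "l \<le> 1/4" using a by (auto simp: l_def)
  have w: "1 + 2*l > 0" using l by simp
  have lnb: "2*l - (2*l)\<^sup>2 \<le> ln (1 + 2*l)" by (rule ln_one_plus_pos_lower_bound) (use l in auto)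
  have key: "l * a - ln (1 + 2*l) / 2 \<le> - ((1 - a)\<^sup>2 / 8)"
    using lnb unfolding l_def by (simp add: power2_eq_square field_simps)
  have "emeasure M {\<omega>\<in>space M. Uf X \<mu> n \<omega> \<le> a * real n * \<sigma>\<^sup>2}
     \<le> ennreal (exp (l * (a * real n * \<sigma>\<^sup>2) / \<sigma>\<^sup>2) * (1 / sqrt (1 + 2*l)) ^ n)"
    by (rule U_lower_raw) (use l in auto)
  also have "exp (l * (a * real n * \<sigma>\<^sup>2) / \<sigma>\<^sup>2) * (1 / sqrt (1 + 2*l)) ^ n
      = exp (real n * (l * a - ln (1 + 2*l) / 2))"
    unfolding inv_sqrt_pow[OF w] exp_add[symmetric]
    by (rule arg_cong[where f=exp]) (use \<sigma>_pos in \<open>simp add: field_simps\<close>)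
  also have "\<dots> \<le> exp (- (real n * (1 - a)\<^sup>2 / 8))"
    using mult_left_mono[OF key, of "real n"] by simp
  finally show ?thesis by (simp add: ennreal_leI)
qed

lemma D_abs:
  assumes n: "n > 0" and b: "b > 0"
  shows "emeasure M {\<omega>\<in>space M. b \<le> \<bar>Df X \<mu> n \<omega>\<bar>} \<le> ennreal (2 * exp (- (b\<^sup>2 / (2 * real n * \<sigma>\<^sup>2))))"
proof -
  define \<theta> where "\<theta> = b / (real n * \<sigma>\<^sup>2)"
  have th: "\<theta> > 0" using n b \<sigma>_pos by (simp add: \<theta>_def)
  have ex: "exp (- (b * \<theta>)) * exp (\<theta>\<^sup>2 * \<sigma>\<^sup>2 / 2) ^ n = exp (- (b\<^sup>2 / (2 * real n * \<sigma>\<^sup>2)))"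
    "exp (- (b * \<theta>)) * exp ((-\<theta>)\<^sup>2 * \<sigma>\<^sup>2 / 2) ^ n = exp (- (b\<^sup>2 / (2 * real n * \<sigma>\<^sup>2)))"
    using n \<sigma>_pos by (simp_all add: exp_of_nat_mult[symmetric] exp_add[symmetric] \<theta>_def power2_eq_square field_simps)
  have sub: "{\<omega>\<in>space M. b \<le> \<bar>Df X \<mu> n \<omega>\<bar>} \<subseteq> {\<omega>\<in>space M. b * \<theta> \<le> \<theta> * Df X \<mu> n \<omega>} \<union> {\<omega>\<in>space M. b * \<theta> \<le> (-\<theta>) * Df X \<mu> n \<omega>}"
  proof safe
    fix \<omega> assume om: "\<omega> \<in> space M" and bd: "b \<le> \<bar>Df X \<mu> n \<omega>\<bar>"
      and nd: "\<not> b * \<theta> \<le> (-\<theta>) * Df X \<mu> n \<omega>"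
    show "b * \<theta> \<le> \<theta> * Df X \<mu> n \<omega>"
    proof (cases "Df X \<mu> n \<omega> \<ge> 0")
      case True thus ?thesis using bd th mult_right_mono[of b "Df X \<mu> n \<omega>" \<theta>] by (simp add: mult.commute)
    next
      case False thus ?thesis using bd th nd mult_right_mono[of b "- Df X \<mu> n \<omega>" \<theta>] by (simp add: mult.commute)
    qed
  qed
  have "emeasure M {\<omega>\<in>space M. b \<le> \<bar>Df X \<mu> n \<omega>\<bar>} \<le> emeasure M ({\<omega>\<in>space M. b * \<theta> \<le> \<theta> * Df X \<mu> n \<omega>} \<union> {\<omega>\<in>space M. b * \<theta> \<le> (-\<theta>) * Df X \<mu> n \<omega>})"
    by (rule emeasure_mono[OF sub]) (simp add: Df_def)
  also have "\<dots> \<le> emeasure M {\<omega>\<in>space M. b * \<theta> \<le> \<theta> * Df X \<mu> n \<omega>} + emeasure M {\<omega>\<in>space M. b * \<theta> \<le> (-\<theta>) * Df X \<mu> n \<omega>}"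
    by (rule emeasure_subadditive) (simp_all add: Df_def)
  also have "\<dots> \<le> ennreal (exp (- (b * \<theta>)) * exp (\<theta>\<^sup>2 * \<sigma>\<^sup>2 / 2) ^ n) + ennreal (exp (- (b * \<theta>)) * exp ((-\<theta>)\<^sup>2 * \<sigma>\<^sup>2 / 2) ^ n)"
    by (intro add_mono D_upper_raw)
  also have "\<dots> = ennreal (2 * exp (- (b\<^sup>2 / (2 * real n * \<sigma>\<^sup>2))))"
    unfolding ex by (simp add: ennreal_plus[symmetric] del: ennreal_plus)
  finally show ?thesis .
qed


lemma Q_lower:
  assumes n: "n > 0" and a: "0 \<le> a" and d: "0 < \<delta>" and ad: "a + \<delta> < 1"
  shows "emeasure M {\<omega>\<in>space M. Qf X n \<omega> \<le> a * real n * \<sigma>\<^sup>2}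
     \<le> ennreal (exp (- (real n * (1 - (a + \<delta>))\<^sup>2 / 8)) + 2 * exp (- (real n * \<delta> / 2)))"
proof -
  define b where "b = real n * \<sigma> * sqrt \<delta>"
  have b: "b > 0" using n d \<sigma>_pos by (simp add: b_def)
  have b2: "b\<^sup>2 = \<delta> * real n * real n * \<sigma>\<^sup>2" using d by (simp add: b_def power_mult_distrib power2_eq_square)
  have pt: "b \<le> \<bar>Df X \<mu> n \<omega>\<bar>" if q: "Qf X n \<omega> \<le> a * real n * \<sigma>\<^sup>2"
      and u: "\<not> Uf X \<mu> n \<omega> \<le> (a + \<delta>) * real n * \<sigma>\<^sup>2" for \<omega>
  proof -
    have "(Df X \<mu> n \<omega>)\<^sup>2 / real n > \<delta> * real n * \<sigma>\<^sup>2"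
      using Uf_Qf[OF n, of X \<mu> \<omega>] q u by (simp add: algebra_simps)
    hence "(Df X \<mu> n \<omega>)\<^sup>2 > b\<^sup>2" using n unfolding b2 by (simp add: field_simps)
    hence "sqrt (b\<^sup>2) < sqrt ((Df X \<mu> n \<omega>)\<^sup>2)" by (rule real_sqrt_less_mono)
    thus "b \<le> \<bar>Df X \<mu> n \<omega>\<bar>" using b by simp
  qed
  have sub: "{\<omega>\<in>space M. Qf X n \<omega> \<le> a * real n * \<sigma>\<^sup>2} \<subseteq>
      {\<omega>\<in>space M. Uf X \<mu> n \<omega> \<le> (a + \<delta>) * real n * \<sigma>\<^sup>2} \<union> {\<omega>\<in>space M. b \<le> \<bar>Df X \<mu> n \<omega>\<bar>}"
    using pt by blast
  have "emeasure M {\<omega>\<in>space M. Qf X n \<omega> \<le> a * real n * \<sigma>\<^sup>2} \<le>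
      emeasure M ({\<omega>\<in>space M. Uf X \<mu> n \<omega> \<le> (a + \<delta>) * real n * \<sigma>\<^sup>2} \<union> {\<omega>\<in>space M. b \<le> \<bar>Df X \<mu> n \<omega>\<bar>})"
    by (rule emeasure_mono[OF sub]) (simp add: Uf_def Df_def)
  also have "\<dots> \<le> emeasure M {\<omega>\<in>space M. Uf X \<mu> n \<omega> \<le> (a + \<delta>) * real n * \<sigma>\<^sup>2} + emeasure M {\<omega>\<in>space M. b \<le> \<bar>Df X \<mu> n \<omega>\<bar>}"
    by (rule emeasure_subadditive) (simp_all add: Uf_def Df_def)
  also have "\<dots> \<le> ennreal (exp (- (real n * (1 - (a + \<delta>))\<^sup>2 / 8))) + ennreal (2 * exp (- (b\<^sup>2 / (2 * real n * \<sigma>\<^sup>2))))"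
    by (intro add_mono U_lower D_abs n b) (use a d ad in auto)
  also have "b\<^sup>2 / (2 * real n * \<sigma>\<^sup>2) = real n * \<delta> / 2" unfolding b2 using n \<sigma>_pos by (simp add: field_simps)
  finally show ?thesis by (simp add: ennreal_plus[symmetric] del: ennreal_plus)
qed


lemma Qf_meas[measurable]: "Qf X n \<in> borel_measurable M"
  unfolding Qf_def sample_mean_def by measurable
lemma Uf_meas[measurable]: "Uf X \<mu> n \<in> borel_measurable M"
  unfolding Uf_def by measurable

lemma union_geom:
  assumes A: "\<And>i. A i \<in> sets M" and b: "\<And>i. emeasure M (A i) \<le> ennreal (C * q ^ i)"
    and C: "0 \<le> C" and q: "0 \<le> q" "q < 1"
  shows "emeasure M (\<Union>i. A i) \<le> ennreal (C / (1 - q))"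
proof -
  have sg: "summable (\<lambda>i. C * q ^ i)" using q by (intro summable_mult summable_geometric) simp
  have "emeasure M (\<Union>i. A i) \<le> (\<Sum>i. emeasure M (A i))"
    by (rule emeasure_subadditive_countably) (use A in auto)
  also have "\<dots> \<le> (\<Sum>i. ennreal (C * q ^ i))"
    by (rule suminf_le[OF b]) (auto intro: summableI)
  also have "\<dots> = ennreal (\<Sum>i. C * q ^ i)"
    by (rule suminf_ennreal2) (use C q sg in auto)
  also have "(\<Sum>i. C * q ^ i) = C / (1 - q)"
    using q by (simp add: suminf_mult summable_geometric suminf_geometric)
  finally show ?thesis .
qed

end

locale sproc = gseq M X \<mu> \<sigma> for M :: "'a measure" and X \<mu> \<sigma> +
  fixes m k :: nat and \<rho> A c :: real
  assumes k1: "k \<ge> 1" and m2: "m \<ge> 2" and \<rho>0: "0 < \<rho>" and \<rho>1: "\<rho> \<le> 1"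
    and A0: "A > 0" and c0: "c > 0"
    and nu_big: "\<sigma> * sqrt (A / c) \<ge> 2"
    and m_small: "real m \<le> \<rho> * (\<sigma> * sqrt (A / c) - 1) - real k"
begin

definition "nu = \<sigma> * sqrt (A / c)"
definition "St n \<omega> \<longleftrightarrow> real n \<ge> \<rho> * sample_sd X n \<omega> * sqrt (A / c)"

lemma s_pos: "sqrt (A / c) > 0" using A0 c0 by simp
lemma nu_pos: "nu > 0" using nu_big by (simp add: nu_def)

lemma Qf_nonneg: "Qf X n \<omega> \<ge> 0" by (simp add: Qf_def sum_nonneg)

lemma sd_eq: "sample_sd X n \<omega> = sqrt (Qf X n \<omega> / (real n - 1))"
  by (simp add: sample_sd_def sample_var_def Qf_def)

lemma F1:
  assumes n: "n \<ge> 2" and st: "St n \<omega>"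
  shows "Qf X n \<omega> * (\<rho> * nu)\<^sup>2 \<le> real n ^ 3 * \<sigma>\<^sup>2"
proof -
  define s where "s = sqrt (A / c)"
  define S where "S = sqrt (Qf X n \<omega> / (real n - 1))"
  have n1: "real n - 1 > 0" using n by simp
  have S0: "S \<ge> 0" using Qf_nonneg n1 by (simp add: S_def)
  have S2: "S\<^sup>2 * (real n - 1) = Qf X n \<omega>" using Qf_nonneg n1 by (simp add: S_def)
  have s0: "s > 0" using s_pos by (simp add: s_def)
  have "\<rho> * S * s \<le> real n" using st by (simp add: St_def sd_eq S_def s_def)
  moreover have "0 \<le> \<rho> * S * s" using \<rho>0 S0 s0 by simp
  ultimately have "(\<rho> * S * s)\<^sup>2 \<le> (real n)\<^sup>2" by (rule power_mono)
  hence "(\<rho> * S * s)\<^sup>2 * ((real n - 1) * \<sigma>\<^sup>2) \<le> (real n)\<^sup>2 * ((real n - 1) * \<sigma>\<^sup>2)"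
    by (rule mult_right_mono) (use n1 in simp)
  also have "\<dots> \<le> (real n)\<^sup>2 * (real n * \<sigma>\<^sup>2)" by (intro mult_left_mono mult_right_mono) auto
  finally have ineq: "(\<rho> * S * s)\<^sup>2 * ((real n - 1) * \<sigma>\<^sup>2) \<le> (real n)\<^sup>2 * (real n * \<sigma>\<^sup>2)" .
  have eq: "(\<rho> * S * s)\<^sup>2 * ((real n - 1) * \<sigma>\<^sup>2) = Qf X n \<omega> * (\<rho> * nu)\<^sup>2"
    unfolding S2[symmetric] nu_def s_def[symmetric] by (simp add: power_mult_distrib)
  have e3: "(real n)\<^sup>2 * (real n * \<sigma>\<^sup>2) = real n ^ 3 * \<sigma>\<^sup>2" by (simp add: power2_eq_square power3_eq_cube)
  show ?thesis using ineq unfolding eq e3 .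
qed

lemma F2:
  assumes n: "n \<ge> 2" and st: "\<not> St n \<omega>"
  shows "real n ^ 2 * (real n - 1) * \<sigma>\<^sup>2 < Uf X \<mu> n \<omega> * (\<rho> * nu)\<^sup>2"
proof -
  define s where "s = sqrt (A / c)"
  define S where "S = sqrt (Qf X n \<omega> / (real n - 1))"
  have n1: "real n - 1 > 0" using n by simp
  have S0: "S \<ge> 0" using Qf_nonneg n1 by (simp add: S_def)
  have S2: "S\<^sup>2 * (real n - 1) = Qf X n \<omega>" using Qf_nonneg n1 by (simp add: S_def)
  have s0: "s > 0" using s_pos by (simp add: s_def)
  have "real n < \<rho> * S * s" using st by (simp add: St_def sd_eq S_def s_def)
  hence "(real n)\<^sup>2 < (\<rho> * S * s)\<^sup>2" by (rule power_strict_mono) auto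
  hence "(real n)\<^sup>2 * ((real n - 1) * \<sigma>\<^sup>2) < (\<rho> * S * s)\<^sup>2 * ((real n - 1) * \<sigma>\<^sup>2)"
    by (rule mult_strict_right_mono) (use n1 \<sigma>_pos in simp)
  also have "(\<rho> * S * s)\<^sup>2 * ((real n - 1) * \<sigma>\<^sup>2) = Qf X n \<omega> * (\<rho> * nu)\<^sup>2"
    unfolding S2[symmetric] nu_def s_def[symmetric] by (simp add: power_mult_distrib)
  also have "\<dots> \<le> Uf X \<mu> n \<omega> * (\<rho> * nu)\<^sup>2" by (intro mult_right_mono Qf_le_Uf) simp
  finally show ?thesis by (simp add: mult_ac)
qed


definition "Far = (\<Union>i. {\<omega>\<in>space M. Qf X (m+i) \<omega> \<le> (1/4) * real (m+i) * \<sigma>\<^sup>2})"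

lemma Far_sets[measurable]: "Far \<in> sets M" unfolding Far_def by measurable

lemma Far_bound: "emeasure M Far \<le> ennreal (3 * exp (- (real m / 32)) / (1 - exp (- (1/32))))"
  unfolding Far_def
proof (rule union_geom)
  fix i
  have "emeasure M {\<omega>\<in>space M. Qf X (m+i) \<omega> \<le> (1/4) * real (m+i) * \<sigma>\<^sup>2}
     \<le> ennreal (exp (- (real (m+i) * (1 - (1/4 + 1/4))\<^sup>2 / 8)) + 2 * exp (- (real (m+i) * (1/4) / 2)))"
    by (rule Q_lower) (use m2 in auto)
  also have "exp (- (real (m+i) * (1 - (1/4 + 1/4))\<^sup>2 / 8)) + 2 * exp (- (real (m+i) * (1/4) / 2))
      \<le> 3 * exp (- (real m / 32)) * exp (- (1/32)) ^ i"
  proof -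
    have e1: "exp (- (real (m+i) * (1/4) / 2)) \<le> exp (- (real (m+i) * (1 - (1/4 + 1/4))\<^sup>2 / 8))"
      by (simp add: power2_eq_square)
    have e2: "exp (- (real (m+i) * (1 - (1/4 + 1/4))\<^sup>2 / 8)) = exp (- (real m / 32)) * exp (- (1/32)) ^ i"
      by (simp add: exp_of_nat_mult[symmetric] exp_add[symmetric] power2_eq_square field_simps)
    from e1 e2 show ?thesis by linarith
  qed
  finally show "emeasure M {\<omega>\<in>space M. Qf X (m+i) \<omega> \<le> (1/4) * real (m+i) * \<sigma>\<^sup>2}
     \<le> ennreal (3 * exp (- (real m / 32)) * exp (- (1/32)) ^ i)" by (simp add: ennreal_leI)
qed auto


end



lemma cubic_aux:
  fixes x y :: real
  assumes "0 < x" "x \<le> y" "y \<le> 1/2"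
  shows "(1 - y)^3 \<le> (1 - y/2) * (1 - y - x/4)"
proof -
  have a: "(1 - y/2) * (1 - 5*y/4) \<le> (1 - y/2) * (1 - y - x/4)"
    by (rule mult_left_mono) (use assms in auto)
  have yy: "y*y \<ge> 0" by simp
  have q: "5/4 - 19*y/8 + y*y \<ge> 0" using assms yy by linarith
  have e: "(1 - y/2) * (1 - 5*y/4) - (1 - y)^3 = y * (5/4 - 19*y/8 + y*y)"
    by (simp add: power3_eq_cube field_simps)
  have "y * (5/4 - 19*y/8 + y*y) \<ge> 0" using q assms by simp
  thus ?thesis using a e by linarith
qed


context sproc begin

definition "xl l = sqrt (real l / nu)"
definition "yy l i = xl l * (1 + real i / 4)"
definition "np l i = nat \<lceil>\<rho> * nu * (1 - yy l i - xl l / 4)\<rceil>"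
definition "aa l i = \<rho> * nu * (1 - yy l i)^3 / real (np l i)"
definition "Blk l i = {\<omega>\<in>space M. yy l i \<le> 1/2 \<and> Qf X (np l i) \<omega> \<le> aa l i * real (np l i) * \<sigma>\<^sup>2}"
definition "Low l = (\<Union>i. Blk l i)"

lemma Blk_sets[measurable]: "Blk l i \<in> sets M" unfolding Blk_def by measurable
lemma Low_sets[measurable]: "Low l \<in> sets M" unfolding Low_def by measurable

lemma nu_ge1: "nu \<ge> 1" using nu_big by (simp add: nu_def)

lemma blk_facts:
  assumes l1: "l \<ge> 1" and y: "yy l i \<le> 1/2"
  shows "xl l > 0" "xl l \<le> yy l i" "real (np l i) \<ge> \<rho> * nu * (1 - yy l i - xl l / 4)"
    "real (np l i) \<ge> \<rho> * nu / 4" "np l i > 0" "aa l i \<le> 1 - yy l i / 2" "aa l i \<ge> 0"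
proof -
  show x0: "xl l > 0" using l1 nu_pos by (simp add: xl_def)
  show xy: "xl l \<le> yy l i" using x0 by (simp add: yy_def)
  have b: "1 - yy l i - xl l / 4 \<ge> 1/4" using xy y by linarith
  have pp: "\<rho> * nu > 0" using \<rho>0 nu_pos by simp
  show np1: "real (np l i) \<ge> \<rho> * nu * (1 - yy l i - xl l / 4)"
    unfolding np_def by (simp add: real_nat_ceiling_ge)
  have "\<rho> * nu * (1 - yy l i - xl l / 4) \<ge> \<rho> * nu * (1/4)" using b pp by (intro mult_left_mono) auto
  thus np2: "real (np l i) \<ge> \<rho> * nu / 4" using np1 by simp
  thus np0: "np l i > 0" using pp by (metis of_nat_0_less_iff order_less_le_trans zero_less_divide_iff zero_less_numeral)
  have yl: "yy l i \<le> 1" using y by simp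
  show "aa l i \<ge> 0" unfolding aa_def using pp yl by simp
  have c: "(1 - yy l i)^3 \<le> (1 - yy l i / 2) * (1 - yy l i - xl l / 4)" by (rule cubic_aux[OF x0 xy y])
  have "aa l i = \<rho> * nu * (1 - yy l i)^3 / real (np l i)" by (simp add: aa_def)
  also have "\<dots> \<le> \<rho> * nu * (1 - yy l i)^3 / (\<rho> * nu * (1 - yy l i - xl l / 4))"
    by (rule divide_left_mono[OF np1]) (use pp yl b np0 in \<open>auto intro!: mult_pos_pos\<close>)
  also have "\<dots> = (1 - yy l i)^3 / (1 - yy l i - xl l / 4)" using pp \<rho>0 nu_pos by simp
  also have "\<dots> \<le> 1 - yy l i / 2" using c b by (simp add: divide_le_eq)
  finally show "aa l i \<le> 1 - yy l i / 2" .
qed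


lemma nu_x2: "nu * (xl l)\<^sup>2 = real l" using nu_pos by (simp add: xl_def)

lemma Blk_bound:
  assumes l1: "l \<ge> 1"
  shows "emeasure M (Blk l i) \<le> ennreal (3 * exp (- (\<rho> * real l / 512)) * exp (- (\<rho> * real l / 2048)) ^ i)"
proof (cases "yy l i \<le> 1/2")
  case False thus ?thesis by (simp add: Blk_def)
next
  case True
  note bf = blk_facts[OF l1 True]
  define y where "y = yy l i"
  define x where "x = xl l"
  define n where "n = np l i"
  define a where "a = aa l i"
  define q where "q = 1 + real i / 4"
  have yq: "y = x * q" by (simp add: y_def x_def q_def yy_def)
  have q1: "q \<ge> 1" by (simp add: q_def)
  have x0: "x > 0" using bf by (simp add: x_def)
  have y0: "y > 0" using x0 q1 yq by simp
  have y12: "y \<le> 1/2" using True by (simp add: y_def)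
  have nb: "real n \<ge> \<rho> * nu / 4" using bf by (simp add: n_def)
  have n0: "n > 0" using bf by (simp add: n_def)
  have ab: "a \<le> 1 - y / 2" "a \<ge> 0" using bf by (simp_all add: a_def y_def)
  have sub: "Blk l i \<subseteq> {\<omega>\<in>space M. Qf X n \<omega> \<le> a * real n * \<sigma>\<^sup>2}"
    by (auto simp: Blk_def n_def a_def)
  have "emeasure M (Blk l i) \<le> emeasure M {\<omega>\<in>space M. Qf X n \<omega> \<le> a * real n * \<sigma>\<^sup>2}"
    by (rule emeasure_mono[OF sub]) measurable
  also have "\<dots> \<le> ennreal (exp (- (real n * (1 - (a + y/4))\<^sup>2 / 8)) + 2 * exp (- (real n * (y/4) / 2)))"
    by (rule Q_lower[OF n0 ab(2)]) (use y0 ab in auto)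
  also have "exp (- (real n * (1 - (a + y/4))\<^sup>2 / 8)) + 2 * exp (- (real n * (y/4) / 2))
      \<le> 3 * exp (- (\<rho> * real l / 512)) * exp (- (\<rho> * real l / 2048)) ^ i"
  proof -
    have E: "exp (- (\<rho> * real l / 512)) * exp (- (\<rho> * real l / 2048)) ^ i = exp (- (\<rho> * real l * q / 512))"
      by (simp add: exp_of_nat_mult[symmetric] exp_add[symmetric] q_def field_simps)
    have pp: "\<rho> * nu > 0" using \<rho>0 nu_pos by simp
    have lq: "nu * y\<^sup>2 = real l * q\<^sup>2" using nu_x2[of l] by (simp add: yq power_mult_distrib x_def)
    have qq: "q \<le> q\<^sup>2" using q1 by (simp add: power2_eq_square)
    have lnu: "real l \<le> nu"
    proof -
      have xy: "x \<le> y" using bf by (simp add: x_def y_def)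
      have "x\<^sup>2 \<le> (1/2)\<^sup>2" by (rule power_mono) (use xy y12 x0 in auto)
      hence "nu * x\<^sup>2 \<le> nu * (1/4)" using nu_pos by (simp add: power2_eq_square)
      thus ?thesis using nu_x2[of l] nu_pos by (simp add: x_def)
    qed
    have nux: "nu * x \<ge> real l"
    proof -
      have "nu * x = sqrt (real l * nu)" using nu_pos by (simp add: x_def xl_def real_sqrt_divide real_sqrt_mult field_simps)
      also have "\<dots> \<ge> sqrt (real l * real l)" using lnu by (intro real_sqrt_le_mono mult_left_mono) auto
      finally show ?thesis by simp
    qed
    have t1: "(1 - (a + y/4))\<^sup>2 \<ge> (y/4)\<^sup>2" using ab y0 by (intro power_mono) auto
    have "real n * (1 - (a + y/4))\<^sup>2 / 8 \<ge> (\<rho> * nu / 4) * (y/4)\<^sup>2 / 8"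
      using nb t1 pp by (intro divide_right_mono mult_mono) auto
    moreover have "(\<rho> * nu / 4) * (y/4)\<^sup>2 / 8 = \<rho> * (nu * y\<^sup>2) / 512" by (simp add: power2_eq_square)
    moreover have "\<rho> * (nu * y\<^sup>2) / 512 \<ge> \<rho> * real l * q / 512"
      unfolding lq using qq \<rho>0 by (simp add: mult_left_mono)
    ultimately have "\<rho> * real l * q / 512 \<le> real n * (1 - (a + y/4))\<^sup>2 / 8" by linarith
    hence e1: "exp (- (real n * (1 - (a + y/4))\<^sup>2 / 8)) \<le> exp (- (\<rho> * real l * q / 512))" by simp
    have "real n * (y/4) / 2 \<ge> (\<rho> * nu / 4) * (y/4) / 2"
      using nb y0 pp by (intro divide_right_mono mult_right_mono) auto
    moreover have "(\<rho> * nu / 4) * (y/4) / 2 = \<rho> * (nu * x) * q / 32" by (simp add: yq)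
    moreover have "\<rho> * (nu * x) * q / 32 \<ge> \<rho> * real l * q / 512"
    proof -
      have "\<rho> * real l * q \<le> \<rho> * (nu * x) * q" using nux \<rho>0 q1 by (intro mult_right_mono mult_left_mono) auto
      moreover have "\<rho> * real l * q \<ge> 0" using \<rho>0 q1 by simp
      ultimately show ?thesis by linarith
    qed
    ultimately have "\<rho> * real l * q / 512 \<le> real n * (y/4) / 2" by linarith
    hence e2: "exp (- (real n * (y/4) / 2)) \<le> exp (- (\<rho> * real l * q / 512))" by simp
    show ?thesis unfolding mult.assoc[of 3] E using e1 e2 by linarith
  qed
  finally show ?thesis by (simp add: ennreal_leI)
qed

lemma Low_bound:
  assumes l1: "l \<ge> 1"
  shows "emeasure M (Low l) \<le> ennreal (3 * exp (- (\<rho> * real l / 512)) / (1 - exp (- (\<rho> / 2048))))"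
proof -
  have q: "0 \<le> exp (- (\<rho> * real l / 2048))" "exp (- (\<rho> * real l / 2048)) < 1" using \<rho>0 l1 by auto
  have "emeasure M (Low l) \<le> ennreal (3 * exp (- (\<rho> * real l / 512)) / (1 - exp (- (\<rho> * real l / 2048))))"
    unfolding Low_def by (rule union_geom[OF _ Blk_bound[OF l1]]) (use q in auto)
  also have "\<dots> \<le> ennreal (3 * exp (- (\<rho> * real l / 512)) / (1 - exp (- (\<rho> / 2048))))"
  proof (intro ennreal_leI divide_left_mono)
    have "\<rho> / 2048 \<le> \<rho> * real l / 2048" using \<rho>0 l1 by (simp add: mult_le_cancel_left1)
    thus "1 - exp (- (\<rho> / 2048)) \<le> 1 - exp (- (\<rho> * real l / 2048))" by simp
    show "0 < (1 - exp (- (\<rho> * real l / 2048))) * (1 - exp (- (\<rho> / 2048)))" using \<rho>0 q by simp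
  qed simp
  finally show ?thesis .
qed

definition "dl l = sqrt (real l * nu)"
definition "tt l = nat \<lfloor>(\<rho> * (nu + dl l - 1) - real k - real m) / real k\<rfloor>"
definition "n1 l = m + k * tt l"
definition "High l = {\<omega>\<in>space M. (1 + xl l) * real (n1 l) * \<sigma>\<^sup>2 \<le> Uf X \<mu> (n1 l) \<omega>}"

lemma High_sets[measurable]: "High l \<in> sets M" unfolding High_def by measurable


lemma dl_eq: "dl l = nu * xl l"
  using nu_pos by (simp add: dl_def xl_def real_sqrt_divide real_sqrt_mult field_simps)

lemma dl_ge: "dl l \<ge> sqrt (real l)"
  unfolding dl_def using nu_ge1 by (simp add: mult_le_cancel_left1)

lemma n1_props:
  "real (n1 l) \<le> \<rho> * (nu + dl l - 1) - real k"
  "real (n1 l) > \<rho> * (nu + dl l - 1) - 2 * real k"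
proof -
  define z where "z = (\<rho> * (nu + dl l - 1) - real k - real m) / real k"
  have d0: "dl l \<ge> 0" by (simp add: dl_def nu_pos less_imp_le)
  have k0: "real k > 0" using k1 by simp
  have "\<rho> * (nu + dl l - 1) \<ge> \<rho> * (nu - 1)" using \<rho>0 d0 by simp
  hence z0: "z \<ge> 0" using m_small k0 unfolding z_def nu_def by simp
  have tt: "real (tt l) = of_int \<lfloor>z\<rfloor>" using z0 by (simp add: tt_def z_def[symmetric])
  have f1: "of_int \<lfloor>z\<rfloor> \<le> z" "z < of_int \<lfloor>z\<rfloor> + 1" by linarith+
  have nn: "real (n1 l) = real m + real k * of_int \<lfloor>z\<rfloor>" by (simp add: n1_def tt)
  have "real k * of_int \<lfloor>z\<rfloor> \<le> real k * z" using f1 k0 by simp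
  moreover have "real k * z < real k * (of_int \<lfloor>z\<rfloor> + 1)" using f1 k0 by simp
  moreover have "real k * z = \<rho> * (nu + dl l - 1) - real k - real m" using k0 by (simp add: z_def)
  ultimately show "real (n1 l) \<le> \<rho> * (nu + dl l - 1) - real k"
    "real (n1 l) > \<rho> * (nu + dl l - 1) - 2 * real k" unfolding nn by (simp_all add: algebra_simps)
qed

lemma n1_ge_m: "n1 l \<ge> m" by (simp add: n1_def)

lemma n1_big:
  assumes K: "sqrt (real l) \<ge> 2 + (4 * real k + 2) / \<rho>"
  shows "real (n1 l) - 1 \<ge> \<rho> * nu + \<rho> * dl l / 2"
proof -
  have "dl l \<ge> 2 + (4 * real k + 2) / \<rho>" using K dl_ge[of l] by linarith
  hence "\<rho> * dl l \<ge> \<rho> * (2 + (4 * real k + 2) / \<rho>)" using \<rho>0 by (simp add: mult_left_mono)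
  moreover have "\<rho> * (2 + (4 * real k + 2) / \<rho>) = 2 * \<rho> + 4 * real k + 2" using \<rho>0 by (simp add: field_simps)
  ultimately have "\<rho> * dl l \<ge> 2 * \<rho> + 4 * real k + 2" by linarith
  thus ?thesis using n1_props(2)[of l] by (simp add: algebra_simps)
qed

lemma High_cond:
  assumes K: "sqrt (real l) \<ge> 2 + (4 * real k + 2) / \<rho>"
  shows "(1 + xl l) * (\<rho> * nu)\<^sup>2 \<le> real (n1 l) * (real (n1 l) - 1)"
proof -
  have x0: "xl l \<ge> 0" by (simp add: xl_def nu_pos less_imp_le)
  have a: "real (n1 l) - 1 \<ge> \<rho> * nu * (1 + xl l / 2)" using n1_big[OF K] dl_eq[of l] by (simp add: algebra_simps)
  have b0: "\<rho> * nu * (1 + xl l / 2) \<ge> 0" using \<rho>0 nu_pos x0 by simp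
  have "(\<rho> * nu * (1 + xl l / 2))\<^sup>2 \<le> (real (n1 l) - 1)\<^sup>2" by (rule power_mono[OF a b0])
  also have "\<dots> \<le> real (n1 l) * (real (n1 l) - 1)"
    using a b0 mult_right_mono[of "real (n1 l) - 1" "real (n1 l)" "real (n1 l) - 1"] by (simp add: power2_eq_square)
  finally have c: "(\<rho> * nu * (1 + xl l / 2))\<^sup>2 \<le> real (n1 l) * (real (n1 l) - 1)" .
  have nn: "0 \<le> \<rho> * (\<rho> * (nu * (nu * (xl l * xl l))))" using \<rho>0 nu_pos by simp
  have "(1 + xl l) * (\<rho> * nu)\<^sup>2 \<le> (\<rho> * nu)\<^sup>2 * (1 + xl l / 2)\<^sup>2"
    using nn by (simp add: power2_eq_square algebra_simps)
  also have "\<dots> = (\<rho> * nu * (1 + xl l / 2))\<^sup>2" by (simp add: power_mult_distrib)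
  finally show ?thesis using c by linarith
qed

lemma high_pt:
  assumes K: "sqrt (real l) \<ge> 2 + (4 * real k + 2) / \<rho>" and om: "\<omega> \<in> space M"
    and ns: "\<not> St (n1 l) \<omega>"
  shows "\<omega> \<in> High l"
proof -
  have n2: "n1 l \<ge> 2" using n1_ge_m[of l] m2 by linarith
  have f: "real (n1 l) ^ 2 * (real (n1 l) - 1) * \<sigma>\<^sup>2 < Uf X \<mu> (n1 l) \<omega> * (\<rho> * nu)\<^sup>2" by (rule F2[OF n2 ns])
  have p: "(\<rho> * nu)\<^sup>2 > 0" using \<rho>0 nu_pos by simp
  have "(1 + xl l) * real (n1 l) * \<sigma>\<^sup>2 * (\<rho> * nu)\<^sup>2 = ((1 + xl l) * (\<rho> * nu)\<^sup>2) * (real (n1 l) * \<sigma>\<^sup>2)"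
    by (simp add: mult_ac)
  also have "\<dots> \<le> (real (n1 l) * (real (n1 l) - 1)) * (real (n1 l) * \<sigma>\<^sup>2)"
    by (rule mult_right_mono[OF High_cond[OF K]]) simp
  also have "\<dots> = real (n1 l) ^ 2 * (real (n1 l) - 1) * \<sigma>\<^sup>2" by (simp add: power2_eq_square mult_ac)
  finally have "(1 + xl l) * real (n1 l) * \<sigma>\<^sup>2 * (\<rho> * nu)\<^sup>2 \<le> Uf X \<mu> (n1 l) \<omega> * (\<rho> * nu)\<^sup>2" using f by linarith
  hence "(1 + xl l) * real (n1 l) * \<sigma>\<^sup>2 \<le> Uf X \<mu> (n1 l) \<omega>" using p by simp
  thus ?thesis using om by (simp add: High_def)
qed

lemma High_bound:
  assumes K: "sqrt (real l) \<ge> 2 + (4 * real k + 2) / \<rho>" and l1: "l \<ge> 1"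
  shows "emeasure M (High l) \<le> ennreal (exp (- (\<rho> * sqrt (real l) / 16)))"
proof -
  have x0: "xl l > 0" using l1 nu_pos by (simp add: xl_def)
  have "emeasure M (High l) \<le> ennreal (exp (- (real (n1 l) * min (xl l) ((xl l)\<^sup>2) / 16)))"
    unfolding High_def by (rule U_upper[OF x0])
  also have "exp (- (real (n1 l) * min (xl l) ((xl l)\<^sup>2) / 16)) \<le> exp (- (\<rho> * sqrt (real l) / 16))"
  proof -
    have ll: "real l * 1 \<le> real l * real l" by (rule mult_left_mono) (use l1 in auto)
    have "sqrt (real l) \<le> sqrt ((real l)\<^sup>2)" by (rule real_sqrt_le_mono) (use ll in \<open>simp only: power2_eq_square mult_1_right\<close>)
    hence sl: "sqrt (real l) \<le> real l" by simp
    have "nu * (xl l)\<^sup>2 = real l" using nu_pos by (simp add: xl_def)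
    hence a1: "nu * (xl l)\<^sup>2 \<ge> sqrt (real l)" using sl by simp
    have a2: "nu * xl l \<ge> sqrt (real l)" using dl_ge[of l] dl_eq[of l] by simp
    have mn: "nu * min (xl l) ((xl l)\<^sup>2) \<ge> sqrt (real l)"
      unfolding min_def using a1 a2 by auto
    have "\<rho> * dl l / 2 \<ge> 0" using \<rho>0 nu_pos by (simp add: dl_def)
    hence nb: "real (n1 l) \<ge> \<rho> * nu" using n1_big[OF K] by linarith
    have "\<rho> * sqrt (real l) \<le> \<rho> * (nu * min (xl l) ((xl l)\<^sup>2))" using mn \<rho>0 by simp
    also have "\<dots> = (\<rho> * nu) * min (xl l) ((xl l)\<^sup>2)" by simp
    also have "\<dots> \<le> real (n1 l) * min (xl l) ((xl l)\<^sup>2)" by (rule mult_right_mono[OF nb]) (use x0 in simp)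
    finally show ?thesis by simp
  qed
  finally show ?thesis by (simp add: ennreal_leI)
qed

end


context sproc begin

definition "Yf \<omega> = \<bar>(real_of_int (sampleN X m k \<rho> A c \<omega>) - nu)\<^sup>2 / nu\<bar>"

lemma stop_cond: "(real (m + k * n) \<ge> \<rho> * sample_sd X (m + k * n) \<omega> * sqrt (A / c)) = St (m + k * n) \<omega>"
  by (simp add: St_def)

lemma N_eq: "real_of_int (sampleN X m k \<rho> A c \<omega>) = of_int \<lceil>real (m + k * stopT X m k \<rho> A c \<omega>) / \<rho>\<rceil>"
  by (simp add: sampleN_def strict_floor_eq)

lemma low_pt:
  assumes om: "\<omega> \<in> space M" and l1: "l \<ge> 1" and st: "St n \<omega>" and n2: "n \<ge> 2" and nm: "n \<ge> m"
    and nlo: "real n > \<rho> * nu / 2" and nhi: "real n \<le> \<rho> * (nu - dl l)"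
  shows "\<omega> \<in> Low l"
proof -
  define x where "x = xl l"
  have x0: "x > 0" using l1 nu_pos by (simp add: x_def xl_def)
  have pp: "\<rho> * nu > 0" using \<rho>0 nu_pos by simp
  define w where "w = real n / (\<rho> * nu)"
  have w1: "w > 1/2" using nlo pp by (simp add: w_def field_simps)
  have "real n \<le> (1 - x) * (\<rho> * nu)" using nhi dl_eq[of l] by (simp add: x_def algebra_simps)
  hence w2: "w \<le> 1 - x" using pp by (simp add: w_def pos_divide_le_eq)
  define z where "z = (1 - x - w) * 4 / x"
  have z0: "z \<ge> 0" using w2 x0 by (simp add: z_def)
  define i where "i = nat \<lfloor>z\<rfloor>"
  have ri: "real i = of_int \<lfloor>z\<rfloor>" using z0 by (simp add: i_def)
  have f1: "real i \<le> z" "z < real i + 1" unfolding ri by linarith+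
  have xz: "x * z / 4 = 1 - x - w" using x0 by (simp add: z_def)
  have yi: "yy l i = x + x * real i / 4" by (simp add: yy_def x_def algebra_simps)
  have y1: "yy l i \<le> 1 - w"
  proof -
    have "x * real i / 4 \<le> x * z / 4" using f1 x0 by simp
    thus ?thesis using yi xz by linarith
  qed
  have y2: "yy l i + x / 4 > 1 - w"
  proof -
    have "x * z / 4 < x * (real i + 1) / 4" using f1 x0 by simp
    thus ?thesis using yi xz by (simp add: algebra_simps)
  qed
  have yh: "yy l i \<le> 1/2" using y1 w1 by linarith
  note bf = blk_facts[OF l1 yh]
  have np_le: "np l i \<le> n"
  proof -
    have "1 - yy l i - xl l / 4 < w" using y2 by (simp add: x_def)
    hence "\<rho> * nu * (1 - yy l i - xl l / 4) < \<rho> * nu * w" using pp by (rule mult_strict_left_mono)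
    also have "\<dots> = real n" using \<rho>0 nu_pos by (simp add: w_def)
    finally have "\<lceil>\<rho> * nu * (1 - yy l i - xl l / 4)\<rceil> \<le> int n" by (simp add: ceiling_le_iff)
    thus ?thesis unfolding np_def by (simp add: nat_le_iff)
  qed
  have Qn: "Qf X n \<omega> * (\<rho> * nu)\<^sup>2 \<le> real n ^ 3 * \<sigma>\<^sup>2" by (rule F1[OF n2 st])
  have nw: "real n = w * (\<rho> * nu)" using \<rho>0 nu_pos by (simp add: w_def)
  have "w * (\<rho> * nu) \<le> (1 - yy l i) * (\<rho> * nu)" using y1 pp by (intro mult_right_mono) auto
  hence nle: "real n \<le> \<rho> * nu * (1 - yy l i)" unfolding nw by (simp add: mult_ac)
  have "real n ^ 3 \<le> (\<rho> * nu * (1 - yy l i)) ^ 3" by (rule power_mono[OF nle]) simp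
  hence "real n ^ 3 * \<sigma>\<^sup>2 \<le> (\<rho> * nu * (1 - yy l i)) ^ 3 * \<sigma>\<^sup>2" by (simp add: mult_right_mono)
  also have "\<dots> = (\<rho> * nu * (1 - yy l i)^3 * \<sigma>\<^sup>2) * (\<rho> * nu)\<^sup>2" by (simp add: power2_eq_square power3_eq_cube)
  finally have "Qf X n \<omega> * (\<rho> * nu)\<^sup>2 \<le> (\<rho> * nu * (1 - yy l i)^3 * \<sigma>\<^sup>2) * (\<rho> * nu)\<^sup>2" using Qn by linarith
  moreover have "(\<rho> * nu)\<^sup>2 > 0" using \<rho>0 nu_pos by simp
  ultimately have Qn2: "Qf X n \<omega> \<le> \<rho> * nu * (1 - yy l i)^3 * \<sigma>\<^sup>2" using mult_le_cancel_right_pos by blast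
  have "Qf X (np l i) \<omega> \<le> Qf X n \<omega>" by (rule Qf_mono[OF np_le])
  also have "\<dots> \<le> \<rho> * nu * (1 - yy l i)^3 * \<sigma>\<^sup>2" by (rule Qn2)
  also have "\<dots> = aa l i * real (np l i) * \<sigma>\<^sup>2" using bf(5) by (simp add: aa_def)
  finally have "Qf X (np l i) \<omega> \<le> aa l i * real (np l i) * \<sigma>\<^sup>2" .
  hence "\<omega> \<in> Blk l i" using om yh by (simp add: Blk_def)
  thus ?thesis by (auto simp: Low_def)
qed


lemma pointwise:
  assumes om: "\<omega> \<in> space M" and l1: "l \<ge> 1" and K: "sqrt (real l) \<ge> 2 + (4 * real k + 2) / \<rho>"
    and Yl: "real l \<le> Yf \<omega>"
  shows "\<omega> \<in> High l \<union> Low l \<or> (\<omega> \<in> Far \<and> Yf \<omega> \<le> nu)"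
proof (cases "\<exists>t. St (m + k * t) \<omega>")
  case False
  hence "\<not> St (n1 l) \<omega>" by (simp add: n1_def)
  thus ?thesis using high_pt[OF K om] by blast
next
  case True
  define T where "T = stopT X m k \<rho> A c \<omega>"
  have TL: "T = (LEAST t. St (m + k * t) \<omega>)" unfolding T_def stopT_def St_def ..
  have stT: "St (m + k * T) \<omega>" using LeastI_ex[OF True] TL by simp
  have below: "\<not> St (m + k * t) \<omega>" if "t < T" for t using not_less_Least[of t "\<lambda>t. St (m + k * t) \<omega>"] that TL by simp
  define n where "n = m + k * T"
  have n2: "n \<ge> 2" "n \<ge> m" using m2 by (auto simp: n_def)
  define v where "v = real n / \<rho>"
  define N where "N = real_of_int (sampleN X m k \<rho> A c \<omega>)"
  have NV: "N = of_int \<lceil>v\<rceil>" by (simp add: N_def N_eq T_def[symmetric] n_def v_def)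
  have Nv: "v \<le> N" "N < v + 1" unfolding NV by linarith+
  have v0: "v > 0" using n2 \<rho>0 by (simp add: v_def)
  have nv: "real n = \<rho> * v" using \<rho>0 by (simp add: v_def)
  have Ydef: "Yf \<omega> = (N - nu)\<^sup>2 / nu" using nu_pos by (simp add: Yf_def N_def)
  show ?thesis
  proof (cases "real n \<le> \<rho> * nu / 2")
    case True
    have pp: "\<rho> * nu > 0" using \<rho>0 nu_pos by simp
    have Qn: "Qf X n \<omega> * (\<rho> * nu)\<^sup>2 \<le> real n ^ 3 * \<sigma>\<^sup>2" by (rule F1[OF n2(1)]) (simp add: n_def stT)
    have "(real n)\<^sup>2 \<le> (\<rho> * nu / 2)\<^sup>2" by (rule power_mono[OF True]) simp
    hence "(real n)\<^sup>2 * (real n * \<sigma>\<^sup>2) \<le> (\<rho> * nu / 2)\<^sup>2 * (real n * \<sigma>\<^sup>2)" by (rule mult_right_mono) simp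
    moreover have "(real n)\<^sup>2 * (real n * \<sigma>\<^sup>2) = real n ^ 3 * \<sigma>\<^sup>2" by (simp add: power2_eq_square power3_eq_cube)
    moreover have "(\<rho> * nu / 2)\<^sup>2 * (real n * \<sigma>\<^sup>2) = (1/4 * real n * \<sigma>\<^sup>2) * (\<rho> * nu)\<^sup>2" by (simp add: power2_eq_square)
    ultimately have "Qf X n \<omega> * (\<rho> * nu)\<^sup>2 \<le> (1/4 * real n * \<sigma>\<^sup>2) * (\<rho> * nu)\<^sup>2" using Qn by linarith
    moreover have "(\<rho> * nu)\<^sup>2 > 0" using \<rho>0 nu_pos by simp
    ultimately have Qle: "Qf X n \<omega> \<le> 1/4 * real n * \<sigma>\<^sup>2" using mult_le_cancel_right_pos by blast
    have "\<omega> \<in> Far" unfolding Far_def using om Qle by (auto simp: n_def intro!: exI[of _ "k * T"])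
    moreover have "Yf \<omega> \<le> nu"
    proof -
      have "v \<le> nu / 2" using True nv \<rho>0 by (simp add: field_simps)
      hence a: "N \<le> nu" "N \<ge> 0" using Nv v0 nu_big by (simp_all add: nu_def)
      have "\<bar>N - nu\<bar> \<le> nu" using a nu_pos by (simp add: abs_le_iff)
      hence "\<bar>N - nu\<bar>\<^sup>2 \<le> nu\<^sup>2" by (rule power_mono) simp
      hence "(N - nu)\<^sup>2 \<le> nu\<^sup>2" by simp
      thus ?thesis unfolding Ydef using nu_pos by (simp add: divide_le_eq power2_eq_square)
    qed
    ultimately show ?thesis by blast
  next
    case False
    have dl0: "dl l \<ge> 0" using nu_pos by (simp add: dl_def)
    have dl2: "(dl l)\<^sup>2 = real l * nu" using nu_pos by (simp add: dl_def)
    have "real l * nu \<le> (N - nu)\<^sup>2" using Yl nu_pos unfolding Ydef by (simp add: le_divide_eq)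
    hence "(dl l)\<^sup>2 \<le> (N - nu)\<^sup>2" using dl2 by simp
    hence dN: "dl l \<le> \<bar>N - nu\<bar>" using dl0 by (simp add: abs_le_square_iff[symmetric] power2_le_iff_abs_le)
    show ?thesis
    proof (cases "N \<ge> nu")
      case True
      hence "N - nu \<ge> dl l" using dN by simp
      hence "v > nu + dl l - 1" using Nv by linarith
      hence "real n > \<rho> * (nu + dl l - 1)" using nv \<rho>0 by simp
      hence "real n > real (n1 l) + real k" using n1_props(1)[of l] by linarith
      hence "m + k * T > m + k * tt l + k" unfolding n_def n1_def by linarith
      hence "k * tt l < k * T" by linarith
      hence "tt l < T" by (simp add: mult_less_cancel1)
      hence "\<not> St (n1 l) \<omega>" using below by (simp add: n1_def)
      thus ?thesis using high_pt[OF K om] by blast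
    next
      case False
      hence "nu - N \<ge> dl l" using dN by simp
      hence "v \<le> nu - dl l" using Nv by linarith
      hence "real n \<le> \<rho> * (nu - dl l)" using nv \<rho>0 by (simp add: mult_left_mono)
      moreover have "St n \<omega>" using stT by (simp add: n_def)
      moreover have "real n > \<rho> * nu / 2" using \<open>\<not> real n \<le> \<rho> * nu / 2\<close> by simp
      ultimately have "\<omega> \<in> Low l" using low_pt[OF om l1 _ n2(1) n2(2)] by blast
      thus ?thesis by blast
    qed
  qed
qed


definition "bb l = exp (- (\<rho> * sqrt (real l) / 16)) + 3 * exp (- (\<rho> * real l / 512)) / (1 - exp (- (\<rho> / 2048)))"

lemma E_bound:
  assumes l1: "l \<ge> 1" and K: "sqrt (real l) \<ge> 2 + (4 * real k + 2) / \<rho>"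
  shows "emeasure M (High l \<union> Low l) \<le> ennreal (bb l)"
proof -
  have "emeasure M (High l \<union> Low l) \<le> emeasure M (High l) + emeasure M (Low l)"
    by (rule emeasure_subadditive) measurable
  also have "\<dots> \<le> ennreal (exp (- (\<rho> * sqrt (real l) / 16))) + ennreal (3 * exp (- (\<rho> * real l / 512)) / (1 - exp (- (\<rho> / 2048))))"
    by (intro add_mono High_bound[OF K l1] Low_bound[OF l1])
  also have "\<dots> = ennreal (bb l)"
    unfolding bb_def using \<rho>0 by (subst ennreal_plus) auto
  finally show ?thesis .
qed

lemma ennreal_le_suminf_term: "(f :: nat \<Rightarrow> ennreal) i \<le> suminf f"
proof -
  have "f i \<le> sum f {..<Suc i}" by (rule member_le_sum) auto
  also have "\<dots> \<le> suminf f" by (rule sum_le_suminf) (auto intro: summableI)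
  finally show ?thesis .
qed

lemma integral_bound:
  fixes L0 :: nat
  assumes L1: "L0 \<ge> 1" and LK: "sqrt (real L0) \<ge> 2 + (4 * real k + 2) / \<rho>"
  shows "(\<integral>\<^sup>+\<omega>. ennreal (Yf \<omega> * indicator {\<omega>. Yf \<omega> > real L0} \<omega>) \<partial>M)
     \<le> ennreal nu * ennreal (3 * exp (- (real m / 32)) / (1 - exp (- (1/32))))
       + (\<Sum>i. ennreal ((real (L0 + i) + 1) * bb (L0 + i)))"
proof -
  define E where "E l = High l \<union> Low l" for l
  have E_sets[measurable]: "E l \<in> sets M" for l by (simp add: E_def)
  define g where "g \<omega> = ennreal nu * indicator Far \<omega> + (\<Sum>i. ennreal (real (L0 + i) + 1) * indicator (E (L0 + i)) \<omega>)" for \<omega>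
  have Kl: "sqrt (real l) \<ge> 2 + (4 * real k + 2) / \<rho>" if "l \<ge> L0" for l
  proof -
    have "sqrt (real L0) \<le> sqrt (real l)" using that by simp
    thus ?thesis using LK by linarith
  qed
  have pt: "ennreal (Yf \<omega> * indicator {\<omega>. Yf \<omega> > real L0} \<omega>) \<le> g \<omega>" if om: "\<omega> \<in> space M" for \<omega>
  proof (cases "Yf \<omega> > real L0")
    case False thus ?thesis by (simp add: indicator_def)
  next
    case True
    define l where "l = nat \<lfloor>Yf \<omega>\<rfloor>"
    have Y0: "Yf \<omega> \<ge> 0" by (simp add: Yf_def)
    have rl: "real l = of_int \<lfloor>Yf \<omega>\<rfloor>" using Y0 by (simp add: l_def)
    have lY: "real l \<le> Yf \<omega>" "Yf \<omega> < real l + 1" unfolding rl by linarith+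
    have lL: "l \<ge> L0" using True unfolding l_def by (simp add: le_nat_floor less_imp_le)
    have l1: "l \<ge> 1" using lL L1 by simp
    have lhs: "ennreal (Yf \<omega> * indicator {\<omega>. Yf \<omega> > real L0} \<omega>) = ennreal (Yf \<omega>)" using True by simp
    from pointwise[OF om l1 Kl[OF lL] lY(1)]
    show ?thesis
    proof
      assume "\<omega> \<in> High l \<union> Low l"
      hence "\<omega> \<in> E (L0 + (l - L0))" using lL by (simp add: E_def)
      hence "ennreal (real (L0 + (l - L0)) + 1) \<le> ennreal (real (L0 + (l - L0)) + 1) * indicator (E (L0 + (l - L0))) \<omega>" by simp
      also have "\<dots> \<le> (\<Sum>i. ennreal (real (L0 + i) + 1) * indicator (E (L0 + i)) \<omega>)"
        by (rule ennreal_le_suminf_term[where f = "\<lambda>i. ennreal (real (L0 + i) + 1) * indicator (E (L0 + i)) \<omega>"])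
      also have "\<dots> \<le> g \<omega>" unfolding g_def by simp
      finally have "ennreal (real l + 1) \<le> g \<omega>" using lL by simp
      moreover have "ennreal (Yf \<omega>) \<le> ennreal (real l + 1)" using lY by (intro ennreal_leI) simp
      ultimately show ?thesis unfolding lhs by simp
    next
      assume "\<omega> \<in> Far \<and> Yf \<omega> \<le> nu"
      hence "ennreal (Yf \<omega>) \<le> ennreal nu * indicator Far \<omega>" by (simp add: ennreal_leI)
      also have "\<dots> \<le> g \<omega>" unfolding g_def by simp
      finally show ?thesis unfolding lhs .
    qed
  qed
  have "(\<integral>\<^sup>+\<omega>. ennreal (Yf \<omega> * indicator {\<omega>. Yf \<omega> > real L0} \<omega>) \<partial>M) \<le> (\<integral>\<^sup>+\<omega>. g \<omega> \<partial>M)"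
    by (rule nn_integral_mono) (rule pt)
  also have "\<dots> = (\<integral>\<^sup>+\<omega>. ennreal nu * indicator Far \<omega> \<partial>M) + (\<integral>\<^sup>+\<omega>. (\<Sum>i. ennreal (real (L0 + i) + 1) * indicator (E (L0 + i)) \<omega>) \<partial>M)"
    unfolding g_def by (rule nn_integral_add) measurable
  also have "(\<integral>\<^sup>+\<omega>. ennreal nu * indicator Far \<omega> \<partial>M) = ennreal nu * emeasure M Far"
    by (rule nn_integral_cmult_indicator) measurable
  also have "(\<integral>\<^sup>+\<omega>. (\<Sum>i. ennreal (real (L0 + i) + 1) * indicator (E (L0 + i)) \<omega>) \<partial>M)
      = (\<Sum>i. \<integral>\<^sup>+\<omega>. ennreal (real (L0 + i) + 1) * indicator (E (L0 + i)) \<omega> \<partial>M)"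
    by (rule nn_integral_suminf) measurable
  also have "\<dots> = (\<Sum>i. ennreal (real (L0 + i) + 1) * emeasure M (E (L0 + i)))"
    by (simp add: nn_integral_cmult_indicator)
  also have "\<dots> \<le> (\<Sum>i. ennreal ((real (L0 + i) + 1) * bb (L0 + i)))"
  proof (rule suminf_le)
    fix i
    have "emeasure M (E (L0 + i)) \<le> ennreal (bb (L0 + i))"
      unfolding E_def by (rule E_bound) (use L1 Kl[of "L0 + i"] in auto)
    hence "ennreal (real (L0 + i) + 1) * emeasure M (E (L0 + i)) \<le> ennreal (real (L0 + i) + 1) * ennreal (bb (L0 + i))"
      by (rule mult_left_mono) simp
    also have "\<dots> = ennreal ((real (L0 + i) + 1) * bb (L0 + i))" by (rule ennreal_mult'[symmetric]) simp
    finally show "ennreal (real (L0 + i) + 1) * emeasure M (E (L0 + i)) \<le> ennreal ((real (L0 + i) + 1) * bb (L0 + i))" .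
  qed (auto intro: summableI)
  finally show ?thesis using Far_bound by (meson add_mono mult_left_mono order.refl order.trans zero_le)
qed

end



definition "bbf \<rho> l = exp (- (\<rho> * sqrt (real l) / 16)) + 3 * exp (- (\<rho> * real l / 512)) / (1 - exp (- (\<rho> / 2048)))"

lemma asymp1:
  fixes \<rho> C :: real assumes "\<rho> > 0" "C > 0"
  shows "((\<lambda>x. x * (x + 1) * (x + 1) * (exp (- (\<rho> * sqrt x / 16)) + C * exp (- (\<rho> * x / 512)))) \<longlongrightarrow> 0) at_top"
  using assms by real_asymp

lemma tail_small:
  fixes \<rho> \<epsilon> :: real assumes \<rho>: "\<rho> > 0" and e: "\<epsilon> > 0"
  shows "\<exists>L1. \<forall>L0\<ge>L1. summable (\<lambda>i. (real (L0 + i) + 1) * bbf \<rho> (L0 + i)) \<and> (\<Sum>i. (real (L0 + i) + 1) * bbf \<rho> (L0 + i)) < \<epsilon>"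
proof -
  define C where "C = 3 / (1 - exp (- (\<rho> / 2048)))"
  have C0: "C > 0" using \<rho> by (simp add: C_def)
  have bbC: "bbf \<rho> l = exp (- (\<rho> * sqrt (real l) / 16)) + C * exp (- (\<rho> * real l / 512))" for l
    by (simp add: bbf_def C_def)
  have "eventually (\<lambda>x. x * (x + 1) * (x + 1) * (exp (- (\<rho> * sqrt x / 16)) + C * exp (- (\<rho> * x / 512))) < 1) at_top"
    using order_tendstoD(2)[OF asymp1[OF \<rho> C0], of 1] by simp
  then obtain X where X: "\<And>x. x \<ge> X \<Longrightarrow> x * (x + 1) * (x + 1) * (exp (- (\<rho> * sqrt x / 16)) + C * exp (- (\<rho> * x / 512))) < 1"
    by (auto simp: eventually_at_top_linorder)
  define L1 where "L1 = max (nat \<lceil>X\<rceil>) (nat \<lceil>1 / \<epsilon>\<rceil> + 1)"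
  have bnd: "(real l + 1) * bbf \<rho> l \<le> 1 / real l - 1 / real (Suc l)" if "l \<ge> L1" for l
  proof -
    have lX: "real l \<ge> X" using that by (simp add: L1_def)
    have l1: "real l \<ge> 1" using that by (simp add: L1_def)
    have h: "real l * (real l + 1) * ((real l + 1) * bbf \<rho> l) < 1"
      using X[OF lX] by (simp add: bbC mult_ac)
    have p: "real l * (real l + 1) > 0" using l1 by simp
    have "(real l + 1) * bbf \<rho> l < 1 / (real l * (real l + 1))"
      using h p by (simp add: field_simps)
    also have "1 / (real l * (real l + 1)) = 1 / real l - 1 / real (Suc l)" using l1 by (simp add: field_simps)
    finally show ?thesis by simp
  qed
  have nn: "(real l + 1) * bbf \<rho> l \<ge> 0" for l
  proof -
    have "exp (- (\<rho> / 2048)) < 1" using \<rho> by simp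
    thus ?thesis by (simp add: bbf_def)
  qed
  show ?thesis
  proof (intro exI allI impI conjI)
    fix L0 assume L0: "L0 \<ge> L1"
    have L0pos: "real L0 \<ge> 1" using L0 by (simp add: L1_def)
    have tel: "(\<lambda>i. 1 / real (L0 + i) - 1 / real (L0 + Suc i)) sums (1 / real L0 - 0)"
    proof -
      have "(\<lambda>i. 1 / real (L0 + i)) \<longlonglongrightarrow> 0"
        by (rule LIMSEQ_ignore_initial_segment[OF lim_inverse_n', of L0, simplified add.commute[of _ L0]])
      from telescope_sums'[OF this] show ?thesis by simp
    qed
    have le: "norm ((real (L0 + i) + 1) * bbf \<rho> (L0 + i)) \<le> 1 / real (L0 + i) - 1 / real (L0 + Suc i)" for i
      using bnd[of "L0 + i"] nn[of "L0 + i"] L0 by simp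
    show sm: "summable (\<lambda>i. (real (L0 + i) + 1) * bbf \<rho> (L0 + i))"
      by (rule summable_comparison_test'[OF sums_summable[OF tel]]) (use le in auto)
    have "(\<Sum>i. (real (L0 + i) + 1) * bbf \<rho> (L0 + i)) \<le> (\<Sum>i. 1 / real (L0 + i) - 1 / real (L0 + Suc i))"
    proof (rule suminf_le[OF _ sm sums_summable[OF tel]])
      fix i show "(real (L0 + i) + 1) * bbf \<rho> (L0 + i) \<le> 1 / real (L0 + i) - 1 / real (L0 + Suc i)"
        using bnd[of "L0 + i"] L0 by simp
    qed
    also have "\<dots> = 1 / real L0" using sums_unique[OF tel] by simp
    also have "\<dots> < \<epsilon>"
    proof -
      have "real L0 > 1 / \<epsilon>" using L0 by (simp add: L1_def) linarith
      thus ?thesis using e L0pos by (simp add: field_simps)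
    qed
    finally show "(\<Sum>i. (real (L0 + i) + 1) * bbf \<rho> (L0 + i)) < \<epsilon>" .
  qed
qed




lemma asymp2: "((\<lambda>x::real. x powr r * exp (- (x / 32))) \<longlongrightarrow> 0) at_top" by real_asymp

lemma asymp3:
  fixes c1 r \<rho> :: real and k :: nat assumes "r > 1" "c1 > 0" "\<rho> > 0"
  shows "eventually (\<lambda>x. c1 * x powr r \<ge> (x + real k) / \<rho> + 2) at_top"
  using assms by real_asymp

lemma asymp_j:
  fixes mm :: "nat \<Rightarrow> nat" and c :: "nat \<Rightarrow> real" and k :: nat
  assumes r: "r > 1" and \<sigma>: "\<sigma> > 0" and A: "A > 0" and \<rho>: "\<rho> > 0" and e: "\<epsilon> > 0"
    and mm1: "\<And>j. mm j \<ge> 1"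
    and m_lim: "filterlim (\<lambda>j. real (mm j)) at_top sequentially"
    and c_pos: "\<And>j. c j > 0"
    and c_O: "c \<in> O(\<lambda>j. real (mm j) powr (- 2 * r))"
    and nstar_O: "(\<lambda>j. \<sigma> * sqrt (A / c j)) \<in> O(\<lambda>j. real (mm j) powr r)"
  shows "eventually (\<lambda>j. \<sigma> * sqrt (A / c j) \<ge> 2 \<and> real (mm j) \<le> \<rho> * (\<sigma> * sqrt (A / c j) - 1) - real k
     \<and> \<sigma> * sqrt (A / c j) * (3 * exp (- (real (mm j) / 32)) / (1 - exp (- (1/32)))) < \<epsilon>) sequentially"
proof -
  obtain C1 where C1: "C1 > 0" "eventually (\<lambda>j. norm (c j) \<le> C1 * norm (real (mm j) powr (- 2 * r))) sequentially"
    using c_O by (elim landau_o.bigE)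
  obtain C2 where C2: "C2 > 0" "eventually (\<lambda>j. norm (\<sigma> * sqrt (A / c j)) \<le> C2 * norm (real (mm j) powr r)) sequentially"
    using nstar_O by (elim landau_o.bigE)
  define c1 where "c1 = \<sigma> * sqrt (A / C1)"
  have c10: "c1 > 0" using \<sigma> A C1 by (simp add: c1_def)
  define D where "D = 3 / (1 - exp (- (1/32::real)))"
  have D0: "D > 0" by (simp add: D_def)
  have ev1: "eventually (\<lambda>x. c1 * x powr r \<ge> (x + real k) / \<rho> + 2) at_top" by (rule asymp3[OF r c10 \<rho>])
  have "((\<lambda>x::real. (C2 * D) * (x powr r * exp (- (x / 32)))) \<longlongrightarrow> (C2 * D) * 0) at_top"
    by (intro tendsto_mult_left asymp2)
  hence ev2: "eventually (\<lambda>x::real. (C2 * D) * (x powr r * exp (- (x / 32))) < \<epsilon>) at_top"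
    using e by (simp add: order_tendstoD(2))
  have ev1': "eventually (\<lambda>j. c1 * real (mm j) powr r \<ge> (real (mm j) + real k) / \<rho> + 2) sequentially"
    by (rule eventually_compose_filterlim[OF ev1 m_lim])
  have ev2': "eventually (\<lambda>j. (C2 * D) * (real (mm j) powr r * exp (- (real (mm j) / 32))) < \<epsilon>) sequentially"
    by (rule eventually_compose_filterlim[OF ev2 m_lim])
  show ?thesis
  proof (rule eventually_mono[OF eventually_conj[OF eventually_conj[OF C1(2) C2(2)] eventually_conj[OF ev1' ev2']]], elim conjE)
    fix j
    assume h1: "norm (c j) \<le> C1 * norm (real (mm j) powr (- 2 * r))"
      and h2: "norm (\<sigma> * sqrt (A / c j)) \<le> C2 * norm (real (mm j) powr r)"
      and h3: "c1 * real (mm j) powr r \<ge> (real (mm j) + real k) / \<rho> + 2"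
      and h4: "(C2 * D) * (real (mm j) powr r * exp (- (real (mm j) / 32))) < \<epsilon>"
    define x where "x = real (mm j)"
    have x1: "x \<ge> 1" using mm1[of j] by (simp add: x_def)
    have cj: "c j \<le> C1 * x powr (- 2 * r)" using h1 c_pos[of j] x1 by (simp add: x_def)
    have xp: "x powr (- 2 * r) > 0" using x1 by simp
    have "A / c j \<ge> A / (C1 * x powr (- 2 * r))"
      by (rule divide_left_mono[OF cj]) (use A c_pos[of j] C1 xp in auto)
    also have "A / (C1 * x powr (- 2 * r)) = (A / C1) * (x powr r)\<^sup>2"
      using x1 by (simp add: powr_minus divide_simps powr_powr[symmetric] powr_realpow[symmetric] powr_mult_base power2_eq_square powr_add[symmetric])
    finally have "sqrt (A / c j) \<ge> sqrt ((A / C1) * (x powr r)\<^sup>2)" by simp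
    also have "sqrt ((A / C1) * (x powr r)\<^sup>2) = sqrt (A / C1) * x powr r" by (simp only: real_sqrt_mult) simp
    finally have nu_lo: "\<sigma> * sqrt (A / c j) \<ge> c1 * x powr r" unfolding c1_def using \<sigma> by (simp add: mult.assoc)
    have nu_hi: "\<sigma> * sqrt (A / c j) \<le> C2 * x powr r" using h2 \<sigma> by (simp add: x_def)
    have h3': "c1 * x powr r \<ge> (x + real k) / \<rho> + 2" using h3 by (simp add: x_def)
    have xk: "(x + real k) / \<rho> \<ge> 0" using x1 \<rho> by simp
    have g1: "\<sigma> * sqrt (A / c j) \<ge> 2" using nu_lo h3' xk by linarith
    have "\<sigma> * sqrt (A / c j) - 1 \<ge> (x + real k) / \<rho>" using nu_lo h3' by linarith
    hence "\<rho> * (\<sigma> * sqrt (A / c j) - 1) \<ge> \<rho> * ((x + real k) / \<rho>)" using \<rho> by (intro mult_left_mono) auto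
    hence g2: "real (mm j) \<le> \<rho> * (\<sigma> * sqrt (A / c j) - 1) - real k" using \<rho> by (simp add: x_def)
    have "\<sigma> * sqrt (A / c j) * (3 * exp (- (real (mm j) / 32)) / (1 - exp (- (1/32)))) = \<sigma> * sqrt (A / c j) * (D * exp (- (x / 32)))"
      by (simp add: D_def x_def)
    also have "\<dots> \<le> C2 * x powr r * (D * exp (- (x / 32)))" by (rule mult_right_mono[OF nu_hi]) (use D0 in simp)
    also have "\<dots> = (C2 * D) * (x powr r * exp (- (x / 32)))" by simp
    also have "\<dots> < \<epsilon>" using h4 by (simp add: x_def)
    finally show "\<sigma> * sqrt (A / c j) \<ge> 2 \<and> real (mm j) \<le> \<rho> * (\<sigma> * sqrt (A / c j) - 1) - real k
     \<and> \<sigma> * sqrt (A / c j) * (3 * exp (- (real (mm j) / 32)) / (1 - exp (- (1/32)))) < \<epsilon>" using g1 g2 by simp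
  qed
qed



theorem lemma5p3:
  fixes M :: "'a measure" and X :: "nat \<Rightarrow> 'a \<Rightarrow> real"
    and \<mu> \<sigma> A \<rho> r :: real and k :: nat
    and m0 :: "nat \<Rightarrow> nat" and c :: "nat \<Rightarrow> real"
  assumes P: "prob_space M"
    and indep: "prob_space.indep_vars M (\<lambda>_. borel) X UNIV"
    and normal: "\<And>i. distributed M lborel (X i) (normal_density \<mu> \<sigma>)"
    and \<sigma>_pos: "\<sigma> > 0" and A_pos: "A > 0"
    and k_pos: "k \<ge> 1" and \<rho>_pos: "0 < \<rho>" and \<rho>_le: "\<rho> \<le> 1"
    and r_gt: "r > 1"
    and m0_pos: "\<And>j. m0 j \<ge> 1"
    and c_pos: "\<And>j. c j > 0"
    and m0_lim: "filterlim m0 at_top sequentially"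
    and c_O: "c \<in> O(\<lambda>j. real (m0 j * k + 1) powr (- 2 * r))"
    and nstar_O: "(\<lambda>j. \<sigma> * sqrt (A / c j)) \<in> O(\<lambda>j. real (m0 j * k + 1) powr r)"
    and limsup: "limsup (\<lambda>j. ereal (real (m0 j * k + 1) / (\<sigma> * sqrt (A / c j)))) < ereal \<rho>"
  shows "\<forall>\<epsilon>>0. \<exists>K J. \<forall>j\<ge>J.
     (\<integral>\<^sup>+ \<omega>. ennreal (\<bar>(real_of_int (sampleN X (m0 j * k + 1) k \<rho> A (c j) \<omega>) - \<sigma> * sqrt (A / c j))\<^sup>2 / (\<sigma> * sqrt (A / c j))\<bar>
          * indicator {\<omega>. \<bar>(real_of_int (sampleN X (m0 j * k + 1) k \<rho> A (c j) \<omega>) - \<sigma> * sqrt (A / c j))\<^sup>2 / (\<sigma> * sqrt (A / c j))\<bar> > K} \<omega>) \<partial>M)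
       < ennreal \<epsilon>"
  proof (intro allI impI)
  fix \<epsilon> :: real assume e: "\<epsilon> > 0"
  have e2: "\<epsilon> / 2 > 0" using e by simp
  obtain L1 where L1: "\<And>L0. L0 \<ge> L1 \<Longrightarrow> summable (\<lambda>i. (real (L0 + i) + 1) * bbf \<rho> (L0 + i)) \<and> (\<Sum>i. (real (L0 + i) + 1) * bbf \<rho> (L0 + i)) < \<epsilon> / 2"
    using tail_small[OF \<rho>_pos e2] by blast
  define L0 where "L0 = max L1 (max 1 (nat \<lceil>(2 + (4 * real k + 2) / \<rho>)\<^sup>2\<rceil>))"
  have L01: "L0 \<ge> 1" by (simp add: L0_def)
  have L0K: "sqrt (real L0) \<ge> 2 + (4 * real k + 2) / \<rho>"
  proof -
    have "real L0 \<ge> (2 + (4 * real k + 2) / \<rho>)\<^sup>2" unfolding L0_def by linarith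
    hence "sqrt (real L0) \<ge> sqrt ((2 + (4 * real k + 2) / \<rho>)\<^sup>2)" by (rule real_sqrt_le_mono)
    moreover have "2 + (4 * real k + 2) / \<rho> \<ge> 0" using \<rho>_pos by simp
    ultimately show ?thesis by simp
  qed
  have L0s: "summable (\<lambda>i. (real (L0 + i) + 1) * bbf \<rho> (L0 + i))" "(\<Sum>i. (real (L0 + i) + 1) * bbf \<rho> (L0 + i)) < \<epsilon> / 2"
    using L1[of L0] by (auto simp: L0_def)
  have mlim: "filterlim (\<lambda>j. real (m0 j * k + 1)) at_top sequentially"
  proof (rule filterlim_at_top_mono[OF filterlim_compose[OF filterlim_real_sequentially m0_lim]])
    show "\<forall>\<^sub>F j in sequentially. real (m0 j) \<le> real (m0 j * k + 1)"
    proof (intro always_eventually allI)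
      fix j
      have "m0 j * 1 \<le> m0 j * k" using k_pos by (rule mult_le_mono2)
      hence "m0 j \<le> m0 j * k + 1" by linarith
      thus "real (m0 j) \<le> real (m0 j * k + 1)" by (rule of_nat_mono)
    qed
  qed
  have "eventually (\<lambda>j. \<sigma> * sqrt (A / c j) \<ge> 2 \<and> real (m0 j * k + 1) \<le> \<rho> * (\<sigma> * sqrt (A / c j) - 1) - real k
     \<and> \<sigma> * sqrt (A / c j) * (3 * exp (- (real (m0 j * k + 1) / 32)) / (1 - exp (- (1/32)))) < \<epsilon> / 2) sequentially"
    by (rule asymp_j[OF r_gt \<sigma>_pos A_pos \<rho>_pos e2 _ mlim c_pos c_O nstar_O]) simp
  then obtain J where J: "\<And>j. j \<ge> J \<Longrightarrow> \<sigma> * sqrt (A / c j) \<ge> 2 \<and> real (m0 j * k + 1) \<le> \<rho> * (\<sigma> * sqrt (A / c j) - 1) - real k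
     \<and> \<sigma> * sqrt (A / c j) * (3 * exp (- (real (m0 j * k + 1) / 32)) / (1 - exp (- (1/32)))) < \<epsilon> / 2"
    by (auto simp: eventually_sequentially)
  show "\<exists>K J. \<forall>j\<ge>J.
     (\<integral>\<^sup>+ \<omega>. ennreal (\<bar>(real_of_int (sampleN X (m0 j * k + 1) k \<rho> A (c j) \<omega>) - \<sigma> * sqrt (A / c j))\<^sup>2 / (\<sigma> * sqrt (A / c j))\<bar>
          * indicator {\<omega>. \<bar>(real_of_int (sampleN X (m0 j * k + 1) k \<rho> A (c j) \<omega>) - \<sigma> * sqrt (A / c j))\<^sup>2 / (\<sigma> * sqrt (A / c j))\<bar> > K} \<omega>) \<partial>M)
       < ennreal \<epsilon>"
  proof (intro exI[of _ "real L0"] exI[of _ J] allI impI)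
    fix j assume jJ: "j \<ge> J"
    note Jj = J[OF jJ]
    interpret S: sproc M X \<mu> \<sigma> "m0 j * k + 1" k \<rho> A "c j"
    proof (intro sproc.intro gseq.intro sproc_axioms.intro gseq_axioms.intro)
      show "prob_space M" by (rule P)
      show "prob_space.indep_vars M (\<lambda>_. borel) X UNIV" by (rule indep)
      show "\<And>i. distributed M lborel (X i) (\<lambda>x. ennreal (normal_density \<mu> \<sigma> x))" by (rule normal)
      have "1 * 1 \<le> m0 j * k" by (rule mult_le_mono[OF m0_pos k_pos])
      thus "m0 j * k + 1 \<ge> 2" by linarith
      show "\<sigma> > 0" by (rule \<sigma>_pos)
      show "k \<ge> 1" by (rule k_pos)
      show "0 < \<rho>" by (rule \<rho>_pos)
      show "\<rho> \<le> 1" by (rule \<rho>_le)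
      show "A > 0" by (rule A_pos)
      show "c j > 0" by (rule c_pos)
      show "\<sigma> * sqrt (A / c j) \<ge> 2" using Jj by blast
      show "real (m0 j * k + 1) \<le> \<rho> * (\<sigma> * sqrt (A / c j) - 1) - real k" using Jj by blast
    qed
    have bbe: "S.bb l = bbf \<rho> l" for l by (simp add: S.bb_def bbf_def)
    have nn: "0 \<le> (real (L0 + i) + 1) * bbf \<rho> (L0 + i)" for i
    proof -
      have "exp (- (\<rho> / 2048)) < 1" using \<rho>_pos by simp
      thus ?thesis by (simp add: bbf_def)
    qed
    have "(\<integral>\<^sup>+\<omega>. ennreal (S.Yf \<omega> * indicator {\<omega>. S.Yf \<omega> > real L0} \<omega>) \<partial>M)
     \<le> ennreal S.nu * ennreal (3 * exp (- (real (m0 j * k + 1) / 32)) / (1 - exp (- (1/32))))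
       + (\<Sum>i. ennreal ((real (L0 + i) + 1) * S.bb (L0 + i)))"
      by (rule S.integral_bound[OF L01 L0K])
    also have "\<dots> = ennreal (\<sigma> * sqrt (A / c j) * (3 * exp (- (real (m0 j * k + 1) / 32)) / (1 - exp (- (1/32)))))
       + ennreal (\<Sum>i. (real (L0 + i) + 1) * bbf \<rho> (L0 + i))"
    proof -
      have "(\<Sum>i. ennreal ((real (L0 + i) + 1) * bbf \<rho> (L0 + i))) = ennreal (\<Sum>i. (real (L0 + i) + 1) * bbf \<rho> (L0 + i))"
        by (rule suminf_ennreal2[OF nn L0s(1)])
      moreover have "ennreal S.nu * ennreal (3 * exp (- (real (m0 j * k + 1) / 32)) / (1 - exp (- (1/32))))
          = ennreal (\<sigma> * sqrt (A / c j) * (3 * exp (- (real (m0 j * k + 1) / 32)) / (1 - exp (- (1/32)))))"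
        using S.nu_pos by (simp add: S.nu_def ennreal_mult[symmetric])
      ultimately show ?thesis by (simp add: bbe)
    qed
    also have "\<dots> = ennreal (\<sigma> * sqrt (A / c j) * (3 * exp (- (real (m0 j * k + 1) / 32)) / (1 - exp (- (1/32))))
       + (\<Sum>i. (real (L0 + i) + 1) * bbf \<rho> (L0 + i)))"
      using S.nu_pos suminf_nonneg[OF L0s(1) nn] by (intro ennreal_plus[symmetric]) (simp_all add: S.nu_def)
    also have "\<dots> < ennreal \<epsilon>"
      using Jj L0s(2) e by (intro ennreal_lessI) auto
    finally show "(\<integral>\<^sup>+ \<omega>. ennreal (\<bar>(real_of_int (sampleN X (m0 j * k + 1) k \<rho> A (c j) \<omega>) - \<sigma> * sqrt (A / c j))\<^sup>2 / (\<sigma> * sqrt (A / c j))\<bar>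
          * indicator {\<omega>. \<bar>(real_of_int (sampleN X (m0 j * k + 1) k \<rho> A (c j) \<omega>) - \<sigma> * sqrt (A / c j))\<^sup>2 / (\<sigma> * sqrt (A / c j))\<bar> > real L0} \<omega>) \<partial>M)
       < ennreal \<epsilon>" unfolding S.Yf_def S.nu_def .
  qed
qed


end
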